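(* Let $\pi_p$ be any probability on $\{0,\dots,p\}$ and $g$ any probability density on $\mathbb R$ symmetric about $0$, and let $\Pi$ be the prior described below. Then there is a universal constant $C$ such that for any $\beta^0,\beta^*\in\mathbb R^p$ and $r\ge1$, \[ \mathbb E_{\beta^0}\Pi\Big(\beta:\|X(\beta-\beta^0)\|_2>7\|X(\beta^*-\beta^0)\|_2+4\sqrt{\log(C_\pi^2D_{\beta^*})}+8\sqrt r\ \Big|\ Y\Big)\le Ce^{-r}. \]
   Context: Observations follow $Y=X\beta+\varepsilon$ with $X$ a deterministic real $n\times p$ matrix and $\varepsilon\sim N_n(0,I_n)$; $\mathbb E_{\beta^0}$ is expectation when $Y\sim N_n(X\beta^0,I_n)$. $S_\beta=\{i:\beta_i\ne0\}$, $\beta_S=(\beta_i)_{i\in S}$. Prior $\Pi$ on $\mathbb R^p$: draw $s\sim\pi_p$, then $S$ uniform among subsets of $\{1,\dots,p\}$ of size $s$, then $\beta_i$, $i\in S$, i.i.d. with density $g$, $\beta_i=0$ for $i\notin S$. Posterior $\Pi(B\mid Y)=\int_Be^{-\|Y-X\beta\|_2^2/2}d\Pi(\beta)/\int e^{-\|Y-X\beta\|_2^2/2}d\Pi(\beta)$. $C_\pi=\sum_{s=0}^p9^s\binom ps^{1/2}\sqrt{\pi_p(s)}$. For $S\subset\{1,\dots,p\}$ let $G_S$ be the probability measure on $\mathbb R^S$ with density $\prod_{i\in S}g(\beta_i)$. For $\beta\in\mathbb R^p$ with $S=S_\beta$, $s=|S|$, \[ D_\beta=\frac{\binom ps}{\pi_p(s)}\exp\Big(\mathrm{KL}\big(G_S(\cdot-\beta_S),G_S\big)+\tfrac12\int\|Xb_S\|_2^2\,dG_S(b_S)\Big),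 \] where $G_S(\cdot-\beta_S)$ is $G_S$ shifted by $\beta_S$, $\mathrm{KL}$ is the Kullback–Leibler divergence, and $Xb_S$ denotes $X$ applied to the vector in $\mathbb R^p$ equal to $b_S$ on $S$ and $0$ off $S$. *)

theory Defs
  imports "HOL-Probability.Probability"
begin

text \<open>Vectors in R^p are functions nat => real, only coordinates j < p are used.
  The design matrix X is nat => nat => real, only entries X i j with i < n, j < p are used.\<close>

definition matvec :: "nat \<Rightarrow> (nat \<Rightarrow> nat \<Rightarrow> real) \<Rightarrow> (nat \<Rightarrow> real) \<Rightarrow> nat \<Rightarrow> real" where
  "matvec p X v = (\<lambda>i. \<Sum>j<p. X i j * v j)"

definition vnorm :: "nat \<Rightarrow> (nat \<Rightarrow> real) \<Rightarrow> real" where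
  "vnorm n w = sqrt (\<Sum>i<n. (w i)\<^sup>2)"

definition supp :: "nat \<Rightarrow> (nat \<Rightarrow> real) \<Rightarrow> nat set" where
  "supp p \<beta> = {i. i < p \<and> \<beta> i \<noteq> 0}"

definition zext :: "nat set \<Rightarrow> (nat \<Rightarrow> real) \<Rightarrow> nat \<Rightarrow> real" where
  "zext S b = (\<lambda>j. if j \<in> S then b j else 0)"

definition subset_pmf :: "nat \<Rightarrow> nat pmf \<Rightarrow> nat set pmf" where
  "subset_pmf p \<pi> = bind_pmf \<pi> (\<lambda>s. pmf_of_set {S. S \<subseteq> {..<p} \<and> card S = s})"

definition G_S :: "(real \<Rightarrow> real) \<Rightarrow> nat set \<Rightarrow> (nat \<Rightarrow> real) measure" where
  "G_S g S = PiM S (\<lambda>_. density lborel (\<lambda>x. ennreal (g x)))"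

definition prior :: "nat \<Rightarrow> nat pmf \<Rightarrow> (real \<Rightarrow> real) \<Rightarrow> (nat \<Rightarrow> real) measure" where
  "prior p \<pi> g = Giry_Monad.bind (measure_pmf (subset_pmf p \<pi>))
      (\<lambda>S. distr (G_S g S) (PiM {..<p} (\<lambda>_. borel)) (\<lambda>b. restrict (zext S b) {..<p}))"

definition lik :: "nat \<Rightarrow> nat \<Rightarrow> (nat \<Rightarrow> nat \<Rightarrow> real) \<Rightarrow> (nat \<Rightarrow> real) \<Rightarrow> (nat \<Rightarrow> real) \<Rightarrow> real" where
  "lik n p X Y \<beta> = exp (- (vnorm n (\<lambda>i. Y i - matvec p X \<beta> i))\<^sup>2 / 2)"

definition posterior :: "nat \<Rightarrow> nat \<Rightarrow> (nat \<Rightarrow> nat \<Rightarrow> real) \<Rightarrow> (nat \<Rightarrow> real) measure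
     \<Rightarrow> (nat \<Rightarrow> real) \<Rightarrow> (nat \<Rightarrow> real) set \<Rightarrow> real" where
  "posterior n p X PiM0 Y B =
     (\<integral>\<beta>. indicator B \<beta> * lik n p X Y \<beta> \<partial>PiM0) / (\<integral>\<beta>. lik n p X Y \<beta> \<partial>PiM0)"

definition data_law :: "nat \<Rightarrow> nat \<Rightarrow> (nat \<Rightarrow> nat \<Rightarrow> real) \<Rightarrow> (nat \<Rightarrow> real) \<Rightarrow> (nat \<Rightarrow> real) measure" where
  "data_law n p X \<beta>0 = PiM {..<n} (\<lambda>i. density lborel (\<lambda>y. ennreal (normal_density (matvec p X \<beta>0 i) 1 y)))"

definition KL :: "'a measure \<Rightarrow> 'a measure \<Rightarrow> ereal" where
  "KL P Q = (if absolutely_continuous Q P \<and> integrable P (entropy_density (exp 1) Q P)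
             then ereal (KL_divergence (exp 1) Q P) else \<infinity>)"

definition C_pi :: "nat \<Rightarrow> nat pmf \<Rightarrow> real" where
  "C_pi p \<pi> = (\<Sum>s\<le>p. 9 ^ s * sqrt (real (p choose s)) * sqrt (pmf \<pi> s))"

definition D_beta :: "nat \<Rightarrow> nat pmf \<Rightarrow> (real \<Rightarrow> real) \<Rightarrow> (nat \<Rightarrow> nat \<Rightarrow> real) \<Rightarrow> nat
     \<Rightarrow> (nat \<Rightarrow> real) \<Rightarrow> ereal" where
  "D_beta n \<pi> g X p \<beta> =
    (let S = supp p \<beta>; s = card S; G = G_S g S;
         K = KL (distr G (PiM S (\<lambda>_. borel)) (\<lambda>b. restrict (\<lambda>i. b i + \<beta> i) S)) G;
         M = (\<integral>\<^sup>+ b. ennreal ((vnorm n (matvec p X (zext S b)))\<^sup>2) \<partial>G)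
     in if pmf \<pi> s = 0 \<or> K = \<infinity> \<or> M = \<infinity> then \<infinity>
        else ereal (real (p choose s) / pmf \<pi> s * exp (real_of_ereal K + enn2real M / 2)))"

definition rate_set :: "nat \<Rightarrow> nat \<Rightarrow> nat pmf \<Rightarrow> (real \<Rightarrow> real) \<Rightarrow> (nat \<Rightarrow> nat \<Rightarrow> real)
     \<Rightarrow> (nat \<Rightarrow> real) \<Rightarrow> (nat \<Rightarrow> real) \<Rightarrow> real \<Rightarrow> (nat \<Rightarrow> real) set" where
  "rate_set n p \<pi> g X \<beta>0 \<beta>s r =
    (let D = D_beta n \<pi> g X p \<beta>s in
     if D = \<infinity> then {}
     else {\<beta>. vnorm n (matvec p X (\<lambda>j. \<beta> j - \<beta>0 j)) >
              7 * vnorm n (matvec p X (\<lambda>j. \<beta>s j - \<beta>0 j))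
              + 4 * sqrt (ln ((C_pi p \<pi>)\<^sup>2 * real_of_ereal D)) + 8 * sqrt r})"

end

theory Submission
  imports Defs
begin


definition ip :: "nat \<Rightarrow> (nat \<Rightarrow> real) \<Rightarrow> (nat \<Rightarrow> real) \<Rightarrow> real" where
  "ip n u v = (\<Sum>i<n. u i * v i)"

definition orthonormal :: "nat \<Rightarrow> nat \<Rightarrow> (nat \<Rightarrow> nat \<Rightarrow> real) \<Rightarrow> bool" where
  "orthonormal n k e \<longleftrightarrow> (\<forall>l<k. \<forall>l'<k. ip n (e l) (e l') = (if l = l' then 1 else 0))"

definition recon :: "nat \<Rightarrow> nat \<Rightarrow> (nat \<Rightarrow> nat \<Rightarrow> real) \<Rightarrow> (nat \<Rightarrow> real) \<Rightarrow> bool" where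
  "recon n k e v \<longleftrightarrow> (\<forall>i<n. v i = (\<Sum>l<k. ip n v (e l) * e l i))"

lemma sum3: "(\<Sum>i\<in>A. \<Sum>j\<in>B. \<Sum>l\<in>C. F i j l) = (\<Sum>l\<in>C. \<Sum>j\<in>B. \<Sum>i\<in>A. (F i j l::real))"
proof -
  have "(\<Sum>i\<in>A. \<Sum>j\<in>B. \<Sum>l\<in>C. F i j l) = (\<Sum>i\<in>A. \<Sum>l\<in>C. \<Sum>j\<in>B. F i j l)"
    by (rule sum.cong[OF refl], rule sum.swap)
  also have "\<dots> = (\<Sum>l\<in>C. \<Sum>i\<in>A. \<Sum>j\<in>B. F i j l)" by (rule sum.swap)
  also have "\<dots> = (\<Sum>l\<in>C. \<Sum>j\<in>B. \<Sum>i\<in>A. F i j l)"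
    by (rule sum.cong[OF refl], rule sum.swap)
  finally show ?thesis .
qed

lemma ip_sym: "ip n u v = ip n v u"
  by (simp add: ip_def mult.commute)

lemma swap_ip: "(\<Sum>i<n. u i * (\<Sum>l<k. c l * e l i)) = (\<Sum>l<k. c l * ip n u (e l))"
  unfolding ip_def sum_distrib_left
  by (subst sum.swap) (simp add: mult_ac)

lemma recon_ip:
  assumes "recon n k e v"
  shows "ip n u v = (\<Sum>l<k. ip n v (e l) * ip n u (e l))"
proof -
  have "ip n u v = (\<Sum>i<n. u i * (\<Sum>l<k. ip n v (e l) * e l i))"
    using assms unfolding ip_def recon_def by (intro sum.cong) auto
  also have "\<dots> = (\<Sum>l<k. ip n v (e l) * ip n u (e l))"
    by (rule swap_ip)
  finally show ?thesis .
qed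

lemma ip_self_nonneg: "0 \<le> ip n v v"
  by (simp add: ip_def sum_nonneg)

lemma ip_self_zero: "ip n v v = 0 \<Longrightarrow> i < n \<Longrightarrow> v i = 0"
  unfolding ip_def by (subst (asm) sum_nonneg_eq_0_iff) auto

lemma gram_schmidt:
  assumes "finite V"
  shows "\<exists>k e. k \<le> card V \<and> orthonormal n k e \<and> (\<forall>v\<in>V. recon n k e v)"
  using assms
proof (induction V rule: finite_induct)
  case empty
  show ?case by (rule exI[of _ 0]) (auto simp: orthonormal_def)
next
  case (insert w V)
  then obtain k e where k: "k \<le> card V" and on: "orthonormal n k e" and rc: "\<forall>v\<in>V. recon n k e v"
    by blast
  define r where "r = (\<lambda>i. w i - (\<Sum>l<k. ip n w (e l) * e l i))"
  have ipr: "ip n u r = ip n u w - (\<Sum>l<k. ip n w (e l) * ip n u (e l))" for u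
  proof -
    have "ip n u r = ip n u w - (\<Sum>i<n. u i * (\<Sum>l<k. ip n w (e l) * e l i))"
      unfolding r_def ip_def by (simp add: right_diff_distrib sum_subtractf)
    then show ?thesis by (simp add: swap_ip)
  qed
  have ipre: "ip n (e l) r = 0" if "l < k" for l
  proof -
    have "(\<Sum>m<k. ip n w (e m) * ip n (e l) (e m)) = (\<Sum>m<k. if m = l then ip n w (e l) else 0)"
      using on that unfolding orthonormal_def by (intro sum.cong) (auto simp: ip_sym[of n "e l"])
    also have "\<dots> = ip n w (e l)" using that by simp
    finally show ?thesis by (simp add: ipr[of "e l"] ip_sym[of n "e l" w])
  qed
  show ?case
  proof (cases "ip n r r = 0")
    case True
    have "recon n k e w"
      unfolding recon_def using ip_self_zero[OF True] by (auto simp: r_def)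
    then show ?thesis using k on rc insert by (intro exI[of _ k] exI[of _ e]) auto
  next
    case False
    define c where "c = sqrt (ip n r r)"
    have c: "c > 0" using False ip_self_nonneg[of n r] by (simp add: c_def)
    have cc: "c * c = ip n r r" using ip_self_nonneg[of n r] by (simp add: c_def)
    define e' where "e' = e(k := (\<lambda>i. r i / c))"
    have ipdiv: "ip n u (\<lambda>i. r i / c) = ip n u r / c" for u
      by (simp add: ip_def sum_divide_distrib)
    have on': "orthonormal n (Suc k) e'"
      unfolding orthonormal_def
    proof (intro allI impI)
      fix l l' assume l: "l < Suc k" and l': "l' < Suc k"
      show "ip n (e' l) (e' l') = (if l = l' then 1 else 0)"
      proof (cases "l = k"; cases "l' = k")
        assume "l = k" "l' = k"
        then show ?thesis using c cc False by (simp add: e'_def ipdiv ip_sym[of n "\<lambda>i. r i / c"])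
      next
        assume "l = k" "l' \<noteq> k"
        then show ?thesis using l' ipre[of l'] by (simp add: e'_def ipdiv ip_sym[of n "\<lambda>i. r i / c"] ip_sym[of n r])
      next
        assume "l \<noteq> k" "l' = k"
        then show ?thesis using l ipre[of l] by (simp add: e'_def ipdiv)
      next
        assume "l \<noteq> k" "l' \<noteq> k"
        then show ?thesis using l l' on by (simp add: e'_def orthonormal_def)
      qed
    qed
    have rcV: "recon n (Suc k) e' v" if "v \<in> V" for v
    proof -
      have rv: "recon n k e v" using rc that by auto
      have "ip n v r = 0"
        using recon_ip[OF rv, of w] ipr[of v] ip_sym[of n v w] by (simp add: mult.commute)
      then show ?thesis using rv unfolding recon_def by (simp add: e'_def ipdiv)
    qed
    have rcw: "recon n (Suc k) e' w"
    proof -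
      have "ip n w r = ip n r r"
      proof -
        have "ip n r r = ip n w r - (\<Sum>i<n. r i * (\<Sum>l<k. ip n w (e l) * e l i))"
          unfolding r_def ip_def by (simp add: left_diff_distrib sum_subtractf mult_ac)
        also have "\<dots> = ip n w r - (\<Sum>l<k. ip n w (e l) * ip n (e l) r)"
          by (simp add: swap_ip ip_sym[of n r])
        finally have "ip n r r = ip n w r - (\<Sum>l<k. ip n w (e l) * ip n (e l) r)" .
        then show ?thesis using ipre by simp
      qed
      then have "ip n w (\<lambda>i. r i / c) * (r i / c) = r i" for i
        using c cc False by (simp add: ipdiv field_simps)
      then show ?thesis unfolding recon_def by (simp add: e'_def r_def)
    qed
    show ?thesis
      using k on' rcV rcw insert by (intro exI[of _ "Suc k"] exI[of _ e']) auto
  qed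
qed



abbreviation N1 :: "real \<Rightarrow> real measure" where
  "N1 m \<equiv> density lborel (\<lambda>y. ennreal (normal_density m 1 y))"

lemma nn_integral_normal1: "(\<integral>\<^sup>+ y. ennreal (normal_density m 1 y) \<partial>lborel) = 1"
  by (subst nn_integral_eq_integral) (auto simp: integral_normal_density)

lemma mgf_normal1:
  "(\<integral>\<^sup>+ y. ennreal (exp (a * (y - m))) \<partial>N1 m) = ennreal (exp (a\<^sup>2 / 2))"
proof -
  have eq: "normal_density m 1 y * exp (a * (y - m)) = exp (a\<^sup>2/2) * normal_density (m + a) 1 y" for y
    by (simp add: normal_density_def field_simps exp_add[symmetric] power2_eq_square)
  have "(\<integral>\<^sup>+ y. ennreal (exp (a * (y - m))) \<partial>N1 m)
      = (\<integral>\<^sup>+ y. ennreal (normal_density m 1 y) * ennreal (exp (a * (y - m))) \<partial>lborel)"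
    by (rule nn_integral_density) auto
  also have "\<dots> = (\<integral>\<^sup>+ y. ennreal (exp (a\<^sup>2/2)) * ennreal (normal_density (m + a) 1 y) \<partial>lborel)"
    by (intro nn_integral_cong) (simp add: ennreal_mult'[symmetric] eq)
  also have "\<dots> = ennreal (exp (a\<^sup>2/2))"
    by (subst nn_integral_cmult) (auto simp: nn_integral_normal1)
  finally show ?thesis .
qed

lemma chi_mgf_normal1:
  assumes "0 \<le> \<mu>" "\<mu> < 1/2"
  shows "(\<integral>\<^sup>+ z. ennreal (exp (\<mu> * z\<^sup>2)) \<partial>N1 0) = ennreal (1 / sqrt (1 - 2 * \<mu>))"
proof -
  define \<sigma> where "\<sigma> = 1 / sqrt (1 - 2 * \<mu>)"
  have pos: "0 < 1 - 2 * \<mu>" using assms by simp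
  have s2: "\<sigma>\<^sup>2 = 1 / (1 - 2 * \<mu>)" using pos by (simp add: \<sigma>_def power_divide)
  have eq: "normal_density 0 1 z * exp (\<mu> * z\<^sup>2) = (1 / sqrt (1 - 2 * \<mu>)) * normal_density 0 \<sigma> z" for z
  proof -
    define B where "B = 1 / sqrt (2 * pi) * exp (- (1 - 2 * \<mu>) * z\<^sup>2 / 2)"
    have h1: "normal_density 0 \<sigma> z = sqrt (1 - 2 * \<mu>) * B"
      using pos unfolding normal_density_def s2 B_def
      by (simp add: real_sqrt_divide real_sqrt_mult field_simps)
    have h2: "normal_density 0 1 z * exp (\<mu> * z\<^sup>2) = B"
      unfolding normal_density_def B_def by (simp add: exp_add[symmetric] field_simps)
    have "sqrt (1 - 2 * \<mu>) \<noteq> 0" using pos by simp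
    then show ?thesis unfolding h1 h2 by simp
  qed
  have "(\<integral>\<^sup>+ z. ennreal (exp (\<mu> * z\<^sup>2)) \<partial>N1 0)
      = (\<integral>\<^sup>+ z. ennreal (normal_density 0 1 z) * ennreal (exp (\<mu> * z\<^sup>2)) \<partial>lborel)"
    by (rule nn_integral_density) auto
  also have "\<dots> = (\<integral>\<^sup>+ z. ennreal (1 / sqrt (1 - 2 * \<mu>)) * ennreal (normal_density 0 \<sigma> z) \<partial>lborel)"
    using pos by (intro nn_integral_cong) (simp add: ennreal_mult'[symmetric] eq)
  also have "\<dots> = ennreal (1 / sqrt (1 - 2 * \<mu>))"
    using pos by (subst nn_integral_cmult) (auto simp: \<sigma>_def nn_integral_eq_integral integral_normal_density)
  finally show ?thesis .
qed

lemma prod_N1_sigma: "product_sigma_finite (\<lambda>i. N1 (m i))"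
  unfolding product_sigma_finite_def
  by (auto intro!: prob_space_imp_sigma_finite[OF prob_space_normal_density])

lemma prodexp:
  fixes n :: nat and w m :: "nat \<Rightarrow> real"
  shows "(\<integral>\<^sup>+Y. ennreal (exp (c * (\<Sum>i<n. w i * (Y i - m i)))) \<partial>PiM {..<n} (\<lambda>i. N1 (m i)))
     = ennreal (exp (c\<^sup>2 * (\<Sum>i<n. (w i)\<^sup>2) / 2))"
proof -
  interpret product_sigma_finite "\<lambda>i. N1 (m i)" by (rule prod_N1_sigma)
  have "(\<integral>\<^sup>+Y. ennreal (exp (c * (\<Sum>i<n. w i * (Y i - m i)))) \<partial>PiM {..<n} (\<lambda>i. N1 (m i)))
      = (\<integral>\<^sup>+Y. (\<Prod>i<n. ennreal (exp (c * w i * (Y i - m i)))) \<partial>PiM {..<n} (\<lambda>i. N1 (m i)))"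
  proof (intro nn_integral_cong)
    fix Y :: "nat \<Rightarrow> real"
    have "exp (c * (\<Sum>i<n. w i * (Y i - m i))) = (\<Prod>i<n. exp (c * w i * (Y i - m i)))"
      unfolding sum_distrib_left by (subst exp_sum) (auto simp: mult.assoc)
    then show "ennreal (exp (c * (\<Sum>i<n. w i * (Y i - m i)))) = (\<Prod>i<n. ennreal (exp (c * w i * (Y i - m i))))"
      by (simp add: prod_ennreal)
  qed
  also have "\<dots> = (\<Prod>i<n. \<integral>\<^sup>+y. ennreal (exp (c * w i * (y - m i))) \<partial>N1 (m i))"
    by (rule product_nn_integral_prod) auto
  also have "\<dots> = (\<Prod>i<n. ennreal (exp ((c * w i)\<^sup>2 / 2)))"
    using mgf_normal1 by simp
  also have "\<dots> = ennreal (exp (c\<^sup>2 * (\<Sum>i<n. (w i)\<^sup>2) / 2))"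
    by (simp add: prod_ennreal exp_sum[symmetric] sum_divide_distrib sum_distrib_left power_mult_distrib)
  finally show ?thesis .
qed

lemma chi_prod:
  fixes k :: nat
  assumes "0 \<le> \<mu>" "\<mu> < 1/2"
  shows "(\<integral>\<^sup>+z. ennreal (exp (\<mu> * (\<Sum>l<k. (z l)\<^sup>2))) \<partial>PiM {..<k} (\<lambda>_. N1 0))
     = ennreal ((1 / sqrt (1 - 2 * \<mu>)) ^ k)"
proof -
  interpret product_sigma_finite "\<lambda>_. N1 0" using prod_N1_sigma[of "\<lambda>_. 0"] by simp
  have "(\<integral>\<^sup>+z. ennreal (exp (\<mu> * (\<Sum>l<k. (z l)\<^sup>2))) \<partial>PiM {..<k} (\<lambda>_. N1 0))
      = (\<integral>\<^sup>+z. (\<Prod>l<k. ennreal (exp (\<mu> * (z l)\<^sup>2))) \<partial>PiM {..<k} (\<lambda>_. N1 0))"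
    by (intro nn_integral_cong) (simp add: sum_distrib_left exp_sum prod_ennreal)
  also have "\<dots> = (\<Prod>l<k. \<integral>\<^sup>+y. ennreal (exp (\<mu> * y\<^sup>2)) \<partial>N1 0)"
    by (rule product_nn_integral_prod) auto
  also have "\<dots> = ennreal ((1 / sqrt (1 - 2 * \<mu>)) ^ k)"
    using assms by (simp add: chi_mgf_normal1 prod_ennreal ennreal_power)
  finally show ?thesis .
qed

lemma ortho_norm:
  assumes on: "orthonormal n k e"
  shows "(\<Sum>i<n. (\<Sum>l<k. z l * e l i)\<^sup>2) = (\<Sum>l<k. (z l)\<^sup>2)"
proof -
  have "(\<Sum>i<n. (\<Sum>l<k. z l * e l i)\<^sup>2) = (\<Sum>i<n. \<Sum>l<k. \<Sum>l'<k. z l * z l' * (e l i * e l' i))"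
    by (simp add: power2_eq_square sum_product mult_ac)
  also have "\<dots> = (\<Sum>l'<k. \<Sum>l<k. \<Sum>i<n. z l * z l' * (e l i * e l' i))"
    by (rule sum3)
  also have "\<dots> = (\<Sum>l'<k. \<Sum>l<k. z l * z l' * ip n (e l) (e l'))"
    by (simp add: ip_def sum_distrib_left)
  also have "\<dots> = (\<Sum>l'<k. \<Sum>l<k. if l = l' then (z l')\<^sup>2 else 0)"
    using on unfolding orthonormal_def by (intro sum.cong refl) (auto simp: power2_eq_square)
  also have "\<dots> = (\<Sum>l<k. (z l)\<^sup>2)"
    by simp
  finally show ?thesis .
qed

lemma gauss:
  fixes n k :: nat and e :: "nat \<Rightarrow> nat \<Rightarrow> real" and m :: "nat \<Rightarrow> real"
  assumes on: "orthonormal n k e" and mu: "0 \<le> \<mu>" "\<mu> < 1/2"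
  shows "(\<integral>\<^sup>+Y. ennreal (exp (\<mu> * (\<Sum>l<k. (ip n (e l) (\<lambda>i. Y i - m i))\<^sup>2))) \<partial>PiM {..<n} (\<lambda>i. N1 (m i)))
     = ennreal ((1 / sqrt (1 - 2 * \<mu>)) ^ k)"
proof -
  define c where "c = sqrt (2 * \<mu>)"
  have c2: "c\<^sup>2 = 2 * \<mu>" using mu by (simp add: c_def)
  define D where "D = PiM {..<n} (\<lambda>i. N1 (m i))"
  define Nk where "Nk = PiM {..<k} (\<lambda>_::nat. N1 0)"
  define q where "q = (\<lambda>l Y. ip n (e l) (\<lambda>i. Y i - m i))"
  define F where "F = (\<lambda>Y z. ennreal (exp (c * (\<Sum>l<k. z l * (q l Y - 0)))))"
  interpret D: prob_space D unfolding D_def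
    by (rule prob_space_PiM, rule prob_space_normal_density) simp
  interpret Nk: prob_space Nk unfolding Nk_def
    by (rule prob_space_PiM, rule prob_space_normal_density) simp
  interpret pair_sigma_finite D Nk ..
  have step1: "ennreal (exp (\<mu> * (\<Sum>l<k. (q l Y)\<^sup>2))) = (\<integral>\<^sup>+z. F Y z \<partial>Nk)" for Y
    using prodexp[where c=c and n=k and w="\<lambda>l. q l Y" and m="\<lambda>_. 0"] c2 unfolding F_def Nk_def by (simp add: mult.commute)
  have meas: "case_prod F \<in> borel_measurable (D \<Otimes>\<^sub>M Nk)"
    unfolding F_def q_def ip_def D_def Nk_def by measurable
  have inner: "(\<integral>\<^sup>+Y. F Y z \<partial>D) = ennreal (exp (\<mu> * (\<Sum>l<k. (z l)\<^sup>2)))" for z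
  proof -
    define w where "w = (\<lambda>i. \<Sum>l<k. z l * e l i)"
    have "F Y z = ennreal (exp (c * (\<Sum>i<n. w i * (Y i - m i))))" for Y
    proof -
      have "(\<Sum>l<k. z l * (q l Y - 0)) = (\<Sum>i<n. w i * (Y i - m i))"
        unfolding q_def ip_def w_def
        by (simp add: sum_distrib_left sum_distrib_right mult_ac) (rule sum.swap)
      then show ?thesis unfolding F_def by simp
    qed
    then have "(\<integral>\<^sup>+Y. F Y z \<partial>D) = ennreal (exp (c\<^sup>2 * (\<Sum>i<n. (w i)\<^sup>2) / 2))"
      unfolding D_def by (simp add: prodexp)
    also have "\<dots> = ennreal (exp (\<mu> * (\<Sum>l<k. (z l)\<^sup>2)))"
      unfolding w_def ortho_norm[OF on] c2 by simp
    finally show ?thesis .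
  qed
  have "(\<integral>\<^sup>+Y. ennreal (exp (\<mu> * (\<Sum>l<k. (q l Y)\<^sup>2))) \<partial>D) = (\<integral>\<^sup>+Y. \<integral>\<^sup>+z. F Y z \<partial>Nk \<partial>D)"
    by (simp add: step1)
  also have "\<dots> = (\<integral>\<^sup>+z. \<integral>\<^sup>+Y. F Y z \<partial>D \<partial>Nk)"
    by (rule Fubini'[OF meas, symmetric])
  also have "\<dots> = (\<integral>\<^sup>+z. ennreal (exp (\<mu> * (\<Sum>l<k. (z l)\<^sup>2))) \<partial>Nk)"
    by (simp add: inner)
  also have "\<dots> = ennreal ((1 / sqrt (1 - 2 * \<mu>)) ^ k)"
    unfolding Nk_def using chi_prod[OF mu] .
  finally show ?thesis unfolding q_def D_def .
qed



lemma subsets_ne: "k \<le> p \<Longrightarrow> {S. S \<subseteq> {..<(p::nat)} \<and> card S = k} \<noteq> {}"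
proof -
  assume "k \<le> p"
  then have "{..<k} \<subseteq> {..<p} \<and> card {..<k} = k" by auto
  then show ?thesis by blast
qed

lemma subsets_fin: "finite {S. S \<subseteq> {..<(p::nat)} \<and> card S = k}"
  by (rule finite_subset[of _ "Pow {..<p}"]) auto

lemma card_subsets: "card {S. S \<subseteq> {..<(p::nat)} \<and> card S = k} = p choose k"
  using n_subsets[of "{..<p}" k] by simp

lemma set_subset_pmf:
  assumes "set_pmf \<pi> \<subseteq> {..p}"
  shows "set_pmf (subset_pmf p \<pi>) \<subseteq> Pow {..<p}"
proof
  fix S assume "S \<in> set_pmf (subset_pmf p \<pi>)"
  then obtain s where s: "s \<in> set_pmf \<pi>" and "S \<in> set_pmf (pmf_of_set {S. S \<subseteq> {..<p} \<and> card S = s})"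
    unfolding subset_pmf_def by auto
  moreover have "s \<le> p" using s assms by auto
  ultimately show "S \<in> Pow {..<p}"
    using set_pmf_of_set[OF subsets_ne subsets_fin] by auto
qed

lemma pmf_subset_pmf:
  assumes "set_pmf \<pi> \<subseteq> {..p}" and S: "S \<subseteq> {..<p}"
  shows "pmf (subset_pmf p \<pi>) S = pmf \<pi> (card S) / real (p choose card S)"
proof -
  have cS: "card S \<le> p" using card_mono[OF _ S] by auto
  have "pmf (subset_pmf p \<pi>) S = (\<integral>s. pmf (pmf_of_set {S. S \<subseteq> {..<p} \<and> card S = s}) S \<partial>measure_pmf \<pi>)"
    unfolding subset_pmf_def pmf_bind ..
  also have "\<dots> = (\<Sum>a\<in>{card S}. pmf (pmf_of_set {T. T \<subseteq> {..<p} \<and> card T = a}) S * pmf \<pi> a)"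
  proof (rule integral_measure_pmf_real)
    fix a assume a: "a \<in> set_pmf \<pi>" and ne: "pmf (pmf_of_set {S. S \<subseteq> {..<p} \<and> card S = a}) S \<noteq> 0"
    have "a \<le> p" using a assms by auto
    then show "a \<in> {card S}" using ne by (simp add: pmf_of_set[OF subsets_ne subsets_fin] split: split_indicator_asm)
  qed simp
  also have "\<dots> = pmf \<pi> (card S) / real (p choose card S)"
    using S by (simp add: pmf_of_set[OF subsets_ne[OF cS] subsets_fin] card_subsets)
  finally show ?thesis .
qed

lemma zext_meas: "(\<lambda>b. zext S b j) \<in> borel_measurable (PiM S (\<lambda>_. borel))"
  unfolding zext_def by (cases "j \<in> S") auto

lemma hS_meas: "(\<lambda>b. restrict (zext S b) {..<p}) \<in> measurable (PiM S (\<lambda>_. borel)) (PiM {..<p} (\<lambda>_. borel))"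
  by (rule measurable_restrict) (rule zext_meas)

lemma prob_G:
  assumes "g \<in> borel_measurable lborel" "(\<integral>\<^sup>+ x. ennreal (g x) \<partial>lborel) = 1"
  shows "prob_space (G_S g S)"
proof -
  have "prob_space (density lborel (\<lambda>x. ennreal (g x)))"
    using assms by (intro prob_spaceI) (simp add: emeasure_density)
  then show ?thesis unfolding G_S_def by (intro prob_space_PiM)
qed

lemma sets_G: "sets (G_S g S) = sets (PiM S (\<lambda>_. borel))"
  unfolding G_S_def by (intro sets_PiM_cong) auto

lemma kernel_meas:
  assumes "g \<in> borel_measurable lborel" "(\<integral>\<^sup>+ x. ennreal (g x) \<partial>lborel) = 1"
  shows "(\<lambda>S. distr (G_S g S) (PiM {..<p} (\<lambda>_. borel)) (\<lambda>b. restrict (zext S b) {..<p}))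
           \<in> measurable (measure_pmf P) (subprob_algebra (PiM {..<p} (\<lambda>_. borel)))"
proof -
  have "distr (G_S g S) (PiM {..<p} (\<lambda>_. borel)) (\<lambda>b. restrict (zext S b) {..<p})
      \<in> space (subprob_algebra (PiM {..<p} (\<lambda>_. borel)))" for S
  proof -
    interpret G: prob_space "G_S g S" using prob_G[OF assms] .
    have m: "(\<lambda>b. restrict (zext S b) {..<p}) \<in> measurable (G_S g S) (PiM {..<p} (\<lambda>_. borel))"
      using hS_meas measurable_cong_sets[OF sets_G refl] by blast
    have "prob_space (distr (G_S g S) (PiM {..<p} (\<lambda>_. borel)) (\<lambda>b. restrict (zext S b) {..<p}))"
      by (rule G.prob_space_distr[OF m])
    then show ?thesis
      by (auto simp: space_subprob_algebra intro: prob_space_imp_subprob_space)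
  qed
  then show ?thesis by simp
qed

lemma sets_prior:
  assumes "g \<in> borel_measurable lborel" "(\<integral>\<^sup>+ x. ennreal (g x) \<partial>lborel) = 1"
  shows "sets (prior p \<pi> g) = sets (PiM {..<p} (\<lambda>_. borel))"
  unfolding prior_def
  by (rule sets_bind) auto

lemma prior_nn:
  assumes "set_pmf \<pi> \<subseteq> {..p}" "g \<in> borel_measurable lborel" "(\<integral>\<^sup>+ x. ennreal (g x) \<partial>lborel) = 1"
    and f: "f \<in> borel_measurable (PiM {..<p} (\<lambda>_. borel))"
  shows "(\<integral>\<^sup>+\<beta>. f \<beta> \<partial>prior p \<pi> g)
       = (\<Sum>S\<in>Pow {..<p}. (\<integral>\<^sup>+b. f (restrict (zext S b) {..<p}) \<partial>G_S g S) * ennreal (pmf (subset_pmf p \<pi>) S))"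
proof -
  have "(\<integral>\<^sup>+\<beta>. f \<beta> \<partial>prior p \<pi> g)
      = (\<integral>\<^sup>+S. \<integral>\<^sup>+\<beta>. f \<beta> \<partial>distr (G_S g S) (PiM {..<p} (\<lambda>_. borel)) (\<lambda>b. restrict (zext S b) {..<p}) \<partial>measure_pmf (subset_pmf p \<pi>))"
    unfolding prior_def by (rule nn_integral_bind[OF f kernel_meas[OF assms(2,3)]])
  also have "\<dots> = (\<integral>\<^sup>+S. \<integral>\<^sup>+b. f (restrict (zext S b) {..<p}) \<partial>G_S g S \<partial>measure_pmf (subset_pmf p \<pi>))"
  proof (intro nn_integral_cong)
    fix S
    have m: "(\<lambda>b. restrict (zext S b) {..<p}) \<in> measurable (G_S g S) (PiM {..<p} (\<lambda>_. borel))"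
      using hS_meas measurable_cong_sets[OF sets_G refl] by blast
    show "(\<integral>\<^sup>+\<beta>. f \<beta> \<partial>distr (G_S g S) (PiM {..<p} (\<lambda>_. borel)) (\<lambda>b. restrict (zext S b) {..<p}))
        = (\<integral>\<^sup>+b. f (restrict (zext S b) {..<p}) \<partial>G_S g S)"
      by (rule nn_integral_distr[OF m]) (simp add: f)
  qed
  also have "\<dots> = (\<Sum>S\<in>Pow {..<p}. (\<integral>\<^sup>+b. f (restrict (zext S b) {..<p}) \<partial>G_S g S) * ennreal (pmf (subset_pmf p \<pi>) S))"
    using set_subset_pmf[OF assms(1)] by (intro nn_integral_measure_pmf_support) auto
  finally show ?thesis .
qed



abbreviation Gg :: "(real \<Rightarrow> real) \<Rightarrow> real measure" where
  "Gg g \<equiv> density lborel (\<lambda>x. ennreal (g x))"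

lemma Gg_sym:
  assumes gm: "g \<in> borel_measurable lborel" and sym: "\<And>x. g (- x) = g x"
  shows "distr (Gg g) borel uminus = Gg g"
proof -
  have gm': "(\<lambda>x. ennreal (g x)) \<in> borel_measurable borel" using gm by simp
  have "density (distr lborel borel uminus) (\<lambda>x. ennreal (g x))
      = distr (density lborel (\<lambda>x. ennreal (g (- x)))) borel uminus"
    by (rule density_distr) (auto simp: gm')
  then show ?thesis by (simp add: lborel_distr_uminus sym)
qed

lemma G_sym:
  assumes gm: "g \<in> borel_measurable lborel" and g1: "(\<integral>\<^sup>+ x. ennreal (g x) \<partial>lborel) = 1"
    and sym: "\<And>x. g (- x) = g x" and fin: "finite S"
  shows "distr (G_S g S) (PiM S (\<lambda>_. borel)) (\<lambda>b. restrict (\<lambda>i. - b i) S) = G_S g S"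
proof -
  have pG: "prob_space (Gg g)"
    using gm g1 by (intro prob_spaceI) (simp add: emeasure_density)
  interpret product_sigma_finite "\<lambda>_. Gg g"
    unfolding product_sigma_finite_def using pG by (auto intro!: prob_space_imp_sigma_finite)
  have m: "(\<lambda>b. restrict (\<lambda>i. - b i) S) \<in> measurable (PiM S (\<lambda>_. Gg g)) (PiM S (\<lambda>_. borel))"
  proof -
    have "(\<lambda>b::nat\<Rightarrow>real. restrict (\<lambda>i. - b i) S) \<in> measurable (PiM S (\<lambda>_. borel)) (PiM S (\<lambda>_. borel))"
    proof (rule measurable_restrict)
      fix i assume "i \<in> S"
      then have "(\<lambda>b::nat\<Rightarrow>real. b i) \<in> borel_measurable (PiM S (\<lambda>_. borel))" by (rule measurable_component_singleton)
      then show "(\<lambda>b::nat\<Rightarrow>real. - b i) \<in> borel_measurable (PiM S (\<lambda>_. borel))" by (rule borel_measurable_uminus)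
    qed
    moreover have "sets (PiM S (\<lambda>_. Gg g)) = sets (PiM S (\<lambda>_. borel))"
      by (rule sets_PiM_cong) simp_all
    ultimately show ?thesis using measurable_cong_sets by blast
  qed
  have "distr (PiM S (\<lambda>_. Gg g)) (PiM S (\<lambda>_. borel)) (\<lambda>b. restrict (\<lambda>i. - b i) S) = PiM S (\<lambda>_. Gg g)"
  proof (rule PiM_eqI[OF fin])
    show "sets (distr (PiM S (\<lambda>_. Gg g)) (PiM S (\<lambda>_. borel)) (\<lambda>b. restrict (\<lambda>i. - b i) S)) = sets (PiM S (\<lambda>_. Gg g))"
      by (simp only: sets_distr) (rule sets_PiM_cong, simp_all)
  next
    fix A assume A: "\<And>i. i \<in> S \<Longrightarrow> A i \<in> sets (Gg g)"
    have A': "A i \<in> sets borel" if "i \<in> S" for i using A[OF that] by simp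
    have pre: "(\<lambda>b. restrict (\<lambda>i. - b i) S) -` Pi\<^sub>E S A \<inter> space (PiM S (\<lambda>_. Gg g))
        = Pi\<^sub>E S (\<lambda>i. uminus -` A i)"
      by (auto simp: space_PiM PiE_iff)
    have "emeasure (distr (PiM S (\<lambda>_. Gg g)) (PiM S (\<lambda>_. borel)) (\<lambda>b. restrict (\<lambda>i. - b i) S)) (Pi\<^sub>E S A)
        = emeasure (PiM S (\<lambda>_. Gg g)) (Pi\<^sub>E S (\<lambda>i. uminus -` A i))"
    proof -
      have PA: "Pi\<^sub>E S A \<in> sets (PiM S (\<lambda>_. borel))" by (rule sets_PiM_I_finite[OF fin]) (rule A')
      show ?thesis by (simp only: emeasure_distr[OF m PA] pre)
    qed
    also have "\<dots> = (\<Prod>i\<in>S. emeasure (Gg g) (uminus -` A i))"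
    proof (rule emeasure_PiM[OF fin])
      fix i assume "i \<in> S"
      then have Ai: "A i \<in> sets borel" using A' by auto
      have um: "(uminus::real\<Rightarrow>real) \<in> borel_measurable borel" by simp
      have "uminus -` A i \<inter> space borel \<in> sets borel" by (rule measurable_sets[OF um Ai])
      then have "uminus -` A i \<in> sets borel" by simp
      then show "uminus -` A i \<in> sets (Gg g)" by simp
    qed
    also have "\<dots> = (\<Prod>i\<in>S. emeasure (Gg g) (A i))"
    proof (intro prod.cong refl)
      fix i assume i: "i \<in> S"
      have "emeasure (Gg g) (A i) = emeasure (distr (Gg g) borel uminus) (A i)"
        using Gg_sym[OF gm sym] by simp
      also have "\<dots> = emeasure (Gg g) (uminus -` A i)"
        using A'[OF i] by (subst emeasure_distr) auto
      finally show "emeasure (Gg g) (uminus -` A i) = emeasure (Gg g) (A i)" by simp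
    qed
    finally show "emeasure (distr (PiM S (\<lambda>_. Gg g)) (PiM S (\<lambda>_. borel)) (\<lambda>b. restrict (\<lambda>i. - b i) S)) (Pi\<^sub>E S A)
        = (\<Prod>i\<in>S. emeasure (Gg g) (A i))" .
  qed
  then show ?thesis unfolding G_S_def .
qed

lemma jensen_exp:
  assumes "prob_space Q" and h: "integrable Q h"
  shows "ennreal (exp (\<integral>x. h x \<partial>Q)) \<le> (\<integral>\<^sup>+x. ennreal (exp (h x)) \<partial>Q)"
proof (cases "(\<integral>\<^sup>+x. ennreal (exp (h x)) \<partial>Q) = \<infinity>")
  case True then show ?thesis by simp
next
  case False
  interpret prob_space Q by fact
  define m where "m = (\<integral>x. h x \<partial>Q)"
  have hm: "h \<in> borel_measurable Q" using h by auto
  have ie: "integrable Q (\<lambda>x. exp (h x))"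
    using False hm by (intro integrableI_bounded) (auto simp: less_top)
  have "(\<integral>x. exp m * (1 + h x - m) \<partial>Q) \<le> (\<integral>x. exp (h x) \<partial>Q)"
  proof (rule integral_mono[OF _ ie])
    show "integrable Q (\<lambda>x. exp m * (1 + h x - m))" using h by auto
    fix x
    have "1 + (h x - m) \<le> exp (h x - m)" by (rule exp_ge_add_one_self)
    then have "exp m * (1 + (h x - m)) \<le> exp m * exp (h x - m)" by (intro mult_left_mono) auto
    then show "exp m * (1 + h x - m) \<le> exp (h x)" by (simp add: exp_diff algebra_simps)
  qed
  moreover have "(\<integral>x. exp m * (1 + h x - m) \<partial>Q) = exp m"
    using h prob_space by (simp add: m_def algebra_simps)
  moreover have "(\<integral>\<^sup>+x. ennreal (exp (h x)) \<partial>Q) = ennreal (\<integral>x. exp (h x) \<partial>Q)"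
    using ie by (intro nn_integral_eq_integral) auto
  ultimately show ?thesis by (simp add: m_def)
qed



lemma vnorm_sq: "(vnorm n w)\<^sup>2 = ip n w w"
  unfolding vnorm_def ip_def by (simp add: sum_nonneg power2_eq_square)

lemma lik_ip: "lik n p X Y \<beta> = exp (- ip n (\<lambda>i. Y i - matvec p X \<beta> i) (\<lambda>i. Y i - matvec p X \<beta> i) / 2)"
  unfolding lik_def vnorm_sq ..

lemma matvec_restrict: "matvec p X (restrict v {..<p}) = matvec p X v"
  unfolding matvec_def by (intro ext sum.cong) auto

lemma matvec_shift:
  "matvec p X (zext (supp p \<beta>s) (restrict (\<lambda>i. b i + \<beta>s i) (supp p \<beta>s)))
    = (\<lambda>i. matvec p X (zext (supp p \<beta>s) b) i + matvec p X \<beta>s i)"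
  unfolding matvec_def zext_def supp_def
  by (intro ext) (auto simp: sum.distrib[symmetric] algebra_simps intro!: sum.cong)

lemma matvec_neg:
  "matvec p X (zext S (restrict (\<lambda>i. - b i) S)) = (\<lambda>i. - matvec p X (zext S b) i)"
  unfolding matvec_def zext_def
  by (intro ext) (auto simp: sum_negf[symmetric] intro!: sum.cong)

lemma ip_expand:
  "ip n (\<lambda>i. u i - z i) (\<lambda>i. u i - z i) = ip n u u - 2 * ip n u z + ip n z z"
  unfolding ip_def by (simp add: sum_subtractf sum.distrib sum_distrib_left algebra_simps power2_eq_square)

lemma abs_ip_le: "\<bar>ip n u z\<bar> \<le> (ip n u u + ip n z z) / 2"
proof -
  have "\<bar>ip n u z\<bar> \<le> (\<Sum>i<n. \<bar>u i * z i\<bar>)" unfolding ip_def by (rule sum_abs)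
  also have "\<dots> \<le> (\<Sum>i<n. (u i * u i + z i * z i) / 2)"
  proof (rule sum_mono)
    fix i
    have "0 \<le> (\<bar>u i\<bar> - \<bar>z i\<bar>)\<^sup>2" by simp
    then show "\<bar>u i * z i\<bar> \<le> (u i * u i + z i * z i) / 2"
      by (simp add: power2_eq_square abs_mult algebra_simps)
  qed
  also have "\<dots> = (ip n u u + ip n z z) / 2"
    unfolding ip_def by (simp add: sum_divide_distrib[symmetric] sum.distrib)
  finally show ?thesis .
qed

declare zext_meas[measurable]

lemma z_meas: "(\<lambda>b. matvec p X (zext S b) i) \<in> borel_measurable (PiM S (\<lambda>_. borel))"
  unfolding matvec_def by measurable

lemma ipz_meas: "(\<lambda>b. ip n u (matvec p X (zext S b))) \<in> borel_measurable (PiM S (\<lambda>_. borel))"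
  unfolding ip_def using z_meas by measurable

lemma ipzz_meas: "(\<lambda>b. ip n (matvec p X (zext S b)) (matvec p X (zext S b))) \<in> borel_measurable (PiM S (\<lambda>_. borel))"
  unfolding ip_def using z_meas by measurable

lemma den_G:
  fixes n p :: nat and X :: "nat \<Rightarrow> nat \<Rightarrow> real" and \<beta>s Y :: "nat \<Rightarrow> real" and g :: "real \<Rightarrow> real"
  assumes gm: "g \<in> borel_measurable lborel" and g1: "(\<integral>\<^sup>+ x. ennreal (g x) \<partial>lborel) = 1"
    and sym: "\<And>x. g (- x) = g x"
  defines "S \<equiv> supp p \<beta>s"
  defines "G \<equiv> G_S g S"
  defines "Q \<equiv> distr G (PiM S (\<lambda>_. borel)) (\<lambda>b. restrict (\<lambda>i. b i + \<beta>s i) S)"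
  defines "M \<equiv> \<integral>\<^sup>+ b. ennreal ((vnorm n (matvec p X (zext S b)))\<^sup>2) \<partial>G"
  assumes ac: "absolutely_continuous G Q" and int: "integrable Q (entropy_density (exp 1) G Q)"
    and Mfin: "M \<noteq> \<infinity>"
  shows "ennreal (lik n p X Y \<beta>s * exp (- KL_divergence (exp 1) G Q - enn2real M / 2))
     \<le> (\<integral>\<^sup>+ b. ennreal (lik n p X Y (restrict (zext S b) {..<p})) \<partial>G)"
proof -
  have finS: "finite S" unfolding S_def supp_def by auto
  interpret G: prob_space G unfolding G_def by (rule prob_G[OF gm g1])
  have sG: "sets G = sets (PiM S (\<lambda>_. borel))" unfolding G_def by (rule sets_G)
  have measG: "measurable G N = measurable (PiM S (\<lambda>_. borel)) N" for N :: "'x measure"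
    by (rule measurable_cong_sets[OF sG refl])
  define T where "T = (\<lambda>b::nat\<Rightarrow>real. restrict (\<lambda>i. b i + \<beta>s i) S)"
  have Tm: "T \<in> measurable G (PiM S (\<lambda>_. borel))"
    unfolding measG T_def by measurable
  interpret Q: prob_space Q unfolding Q_def T_def[symmetric] by (rule G.prob_space_distr[OF Tm])
  have sQ: "sets Q = sets G" unfolding Q_def sG by simp
  define \<rho> where "\<rho> = RN_deriv G Q"
  have \<rho>m: "\<rho> \<in> borel_measurable G" unfolding \<rho>_def by simp
  have Qd: "density G \<rho> = Q" unfolding \<rho>_def by (rule G.density_RN_deriv[OF ac sQ])
  obtain D where Dm: "D \<in> borel_measurable G" and DG: "AE x in G. \<rho> x = ennreal (D x)"
      and DQ: "AE x in Q. 0 < D x" and D0: "\<And>x. 0 \<le> D x"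
    using G.real_RN_deriv[OF _ ac sQ] Q.finite_measure_axioms unfolding \<rho>_def by metis
  have DQ': "AE x in Q. \<rho> x = ennreal (D x)"
    by (rule absolutely_continuous_AE[OF sQ ac DG])
  define z where "z = (\<lambda>b. matvec p X (zext S b))"
  define u where "u = (\<lambda>i. Y i - matvec p X \<beta>s i)"
  define F where "F = (\<lambda>b. lik n p X Y (restrict (zext S b) {..<p}))"
  have F_eq: "F b = exp (- ip n (\<lambda>i. Y i - z b i) (\<lambda>i. Y i - z b i) / 2)" for b
    unfolding F_def lik_ip matvec_restrict z_def ..
  have zm: "(\<lambda>b. z b i) \<in> borel_measurable G" for i unfolding measG z_def by (rule z_meas)
  have Fm: "F \<in> borel_measurable G"
    unfolding F_eq[abs_def] ip_def using zm by measurable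
  define ent where "ent = entropy_density (exp 1) G Q"
  have ent_eq: "ent x = ln (enn2real (\<rho> x))" for x
    unfolding ent_def entropy_density_def \<rho>_def by (simp add: log_def)
  define lF where "lF = (\<lambda>b. - ip n (\<lambda>i. Y i - z b i) (\<lambda>i. Y i - z b i) / 2)"
  define h where "h = (\<lambda>b. lF b - ent b)"
  have claim1: "(\<integral>\<^sup>+b. ennreal (exp (h b)) \<partial>Q) \<le> (\<integral>\<^sup>+ b. ennreal (F b) \<partial>G)"
  proof -
    have "(\<integral>\<^sup>+b. ennreal (exp (h b)) \<partial>Q) = (\<integral>\<^sup>+b. ennreal (F b / D b) \<partial>Q)"
    proof (rule nn_integral_cong_AE)
      show "AE b in Q. ennreal (exp (h b)) = ennreal (F b / D b)"
        using DQ DQ'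
      proof eventually_elim
        case (elim b)
        then have "h b = lF b - ln (D b)" unfolding h_def ent_eq by simp
        then have "exp (h b) = exp (lF b) / D b" using elim by (simp add: exp_diff)
        then show ?case by (simp add: F_eq lF_def)
      qed
    qed
    also have "\<dots> = (\<integral>\<^sup>+b. ennreal (F b / D b) \<partial>density G \<rho>)" unfolding Qd ..
    also have "\<dots> = (\<integral>\<^sup>+b. \<rho> b * ennreal (F b / D b) \<partial>G)"
      by (rule nn_integral_density[OF \<rho>m]) (use Fm Dm in measurable)
    also have "\<dots> \<le> (\<integral>\<^sup>+ b. ennreal (F b) \<partial>G)"
    proof (rule nn_integral_mono_AE)
      show "AE b in G. \<rho> b * ennreal (F b / D b) \<le> ennreal (F b)"
        using DG
      proof eventually_elim
        case (elim b)
        have "D b * (F b / D b) \<le> F b"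
          using D0[of b] by (cases "D b = 0") (auto simp: F_eq)
        then show ?case using D0[of b] elim by (simp add: ennreal_mult'[symmetric])
      qed
    qed
    finally show ?thesis .
  qed
  have lFT: "lF (T b) = - (ip n u u - 2 * ip n u (z b) + ip n (z b) (z b)) / 2" for b
  proof -
    have "z (T b) = (\<lambda>i. z b i + matvec p X \<beta>s i)"
      unfolding z_def T_def S_def by (rule matvec_shift)
    then have "(\<lambda>i. Y i - z (T b) i) = (\<lambda>i. u i - z b i)" unfolding u_def by auto
    then show ?thesis unfolding lF_def by (simp add: ip_expand)
  qed
  have zzm: "(\<lambda>b. ip n (z b) (z b)) \<in> borel_measurable G"
    unfolding measG z_def by (rule ipzz_meas)
  have Meq: "M = (\<integral>\<^sup>+b. ennreal (ip n (z b) (z b)) \<partial>G)"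
    unfolding M_def z_def vnorm_sq ..
  have int_zz: "integrable G (\<lambda>b. ip n (z b) (z b))"
    by (rule integrableI_nonneg[OF zzm]) (use Mfin Meq ip_self_nonneg in \<open>auto simp: less_top\<close>)
  have int_zz_val: "(\<integral>b. ip n (z b) (z b) \<partial>G) = enn2real M"
    unfolding Meq by (rule integral_eq_nn_integral[OF zzm]) (simp add: ip_self_nonneg)
  have uzm: "(\<lambda>b. ip n u (z b)) \<in> borel_measurable G"
    unfolding measG z_def by (rule ipz_meas)
  have int_uz: "integrable G (\<lambda>b. ip n u (z b))"
  proof (rule Bochner_Integration.integrable_bound[OF _ uzm])
    show "integrable G (\<lambda>b. (ip n u u + ip n (z b) (z b)) / 2)" using int_zz by auto
    show "AE b in G. norm (ip n u (z b)) \<le> norm ((ip n u u + ip n (z b) (z b)) / 2)"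
      using abs_ip_le ip_self_nonneg by (auto intro!: AE_I2 simp: add_nonneg_nonneg)
  qed
  have int_uz_val: "(\<integral>b. ip n u (z b) \<partial>G) = 0"
  proof -
    define Nf where "Nf = (\<lambda>b::nat\<Rightarrow>real. restrict (\<lambda>i. - b i) S)"
    have Nm: "Nf \<in> measurable G (PiM S (\<lambda>_. borel))"
      unfolding measG Nf_def by measurable
    have dG: "distr G (PiM S (\<lambda>_. borel)) Nf = G"
      unfolding G_def Nf_def by (rule G_sym[OF gm g1 sym finS])
    have "(\<integral>b. ip n u (z b) \<partial>G) = (\<integral>b. ip n u (z b) \<partial>distr G (PiM S (\<lambda>_. borel)) Nf)"
      unfolding dG ..
    also have "\<dots> = (\<integral>b. ip n u (z (Nf b)) \<partial>G)"
      by (rule integral_distr[OF Nm]) (unfold z_def, rule ipz_meas)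
    also have "\<dots> = (\<integral>b. - ip n u (z b) \<partial>G)"
      unfolding z_def Nf_def matvec_neg by (simp add: ip_def sum_negf[symmetric])
    finally show ?thesis by simp
  qed
  have lFm: "lF \<in> borel_measurable (PiM S (\<lambda>_. borel))"
    unfolding lF_def ip_def z_def using z_meas by measurable
  have int_lF: "integrable Q lF"
    unfolding Q_def T_def[symmetric] integrable_distr_eq[OF Tm lFm] lFT
    using int_zz int_uz by auto
  have int_lF_val: "(\<integral>b. lF b \<partial>Q) = - ip n u u / 2 - enn2real M / 2"
  proof -
    have "(\<integral>b. lF b \<partial>Q) = (\<integral>b. lF (T b) \<partial>G)"
      unfolding Q_def T_def[symmetric] by (rule integral_distr[OF Tm lFm])
    also have "\<dots> = (\<integral>b. - ip n u u / 2 + ip n u (z b) - ip n (z b) (z b) / 2 \<partial>G)"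
      unfolding lFT by (rule Bochner_Integration.integral_cong) (auto simp: field_simps)
    also have "\<dots> = - ip n u u / 2 + (\<integral>b. ip n u (z b) \<partial>G) - (\<integral>b. ip n (z b) (z b) \<partial>G) / 2"
      using int_zz int_uz by (simp add: G.prob_space)
    finally show ?thesis unfolding int_uz_val int_zz_val by simp
  qed
  have int_h: "integrable Q h"
    unfolding h_def using int_lF int unfolding ent_def by auto
  have int_h_val: "(\<integral>b. h b \<partial>Q) = - ip n u u / 2 - enn2real M / 2 - KL_divergence (exp 1) G Q"
    unfolding h_def using int_lF int int_lF_val unfolding ent_def KL_divergence_def by simp
  have "ennreal (exp (\<integral>b. h b \<partial>Q)) \<le> (\<integral>\<^sup>+b. ennreal (exp (h b)) \<partial>Q)"
    by (rule jensen_exp[OF Q.prob_space_axioms int_h])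
  also note claim1
  also have "exp (\<integral>b. h b \<partial>Q) = lik n p X Y \<beta>s * exp (- KL_divergence (exp 1) G Q - enn2real M / 2)"
    unfolding int_h_val lik_ip u_def[symmetric] by (simp add: exp_add[symmetric] exp_diff[symmetric] algebra_simps)
  finally show ?thesis unfolding F_def .
qed



lemma cs_sum: "(\<Sum>i\<in>I. a i * b i) \<le> sqrt (\<Sum>i\<in>I. (a i)\<^sup>2) * sqrt (\<Sum>i\<in>I. (b i)\<^sup>2)"
proof -
  have "(\<Sum>i\<in>I. a i * b i)\<^sup>2 \<le> (\<Sum>i\<in>I. (a i)\<^sup>2) * (\<Sum>i\<in>I. (b i)\<^sup>2)"
    by (rule Cauchy_Schwarz_ineq_sum)
  then have "sqrt ((\<Sum>i\<in>I. a i * b i)\<^sup>2) \<le> sqrt ((\<Sum>i\<in>I. (a i)\<^sup>2) * (\<Sum>i\<in>I. (b i)\<^sup>2))"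
    by (rule real_sqrt_le_mono)
  then show ?thesis by (simp add: real_sqrt_mult)
qed

lemma ip_cs: "ip n a v \<le> sqrt (ip n a a) * sqrt (ip n v v)"
  unfolding ip_def using cs_sum[of "\<lambda>i. a i" "\<lambda>i. v i" "{..<n}"] by (simp add: power2_eq_square)

lemma vnorm_ip: "vnorm n w = sqrt (ip n w w)"
  unfolding vnorm_def ip_def by (simp add: power2_eq_square)

lemma ip_add_left: "ip n (\<lambda>i. a i + c i) v = ip n a v + ip n c v"
  unfolding ip_def by (simp add: distrib_right sum.distrib)

lemma ip_neg: "ip n (\<lambda>i. - a i) (\<lambda>i. - a i) = ip n a a"
  unfolding ip_def by simp

lemma vnorm_tri: "sqrt (ip n (\<lambda>i. a i + c i) (\<lambda>i. a i + c i)) \<le> sqrt (ip n a a) + sqrt (ip n c c)"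
proof -
  have "ip n (\<lambda>i. a i + c i) (\<lambda>i. a i + c i) = (\<Sum>i<n. a i * a i + 2 * (a i * c i) + c i * c i)"
    unfolding ip_def by (intro sum.cong refl) (simp add: algebra_simps)
  also have "\<dots> = ip n a a + 2 * ip n a c + ip n c c"
    unfolding ip_def by (simp only: sum.distrib sum_distrib_left)
  finally have e: "ip n (\<lambda>i. a i + c i) (\<lambda>i. a i + c i) = ip n a a + 2 * ip n a c + ip n c c" .
  have sa: "sqrt (ip n a a) * sqrt (ip n a a) = ip n a a" using ip_self_nonneg[of n a] by simp
  have sc: "sqrt (ip n c c) * sqrt (ip n c c) = ip n c c" using ip_self_nonneg[of n c] by simp
  have "ip n a c \<le> sqrt (ip n a a) * sqrt (ip n c c)" by (rule ip_cs)
  then have le: "ip n (\<lambda>i. a i + c i) (\<lambda>i. a i + c i) \<le> (sqrt (ip n a a) + sqrt (ip n c c))\<^sup>2"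
    unfolding e power2_eq_square using sa sc by (simp add: distrib_left distrib_right)
  have "sqrt (ip n (\<lambda>i. a i + c i) (\<lambda>i. a i + c i)) \<le> sqrt ((sqrt (ip n a a) + sqrt (ip n c c))\<^sup>2)"
    using le by (rule real_sqrt_le_mono)
  also have "\<dots> = sqrt (ip n a a) + sqrt (ip n c c)" using ip_self_nonneg[of n a] ip_self_nonneg[of n c] by simp
  finally show ?thesis .
qed

lemma recon_add: "recon n k e v \<Longrightarrow> recon n k e w \<Longrightarrow> recon n k e (\<lambda>i. v i + w i)"
  unfolding recon_def by (simp add: ip_add_left distrib_right sum.distrib)

lemma recon_scale: "recon n k e v \<Longrightarrow> recon n k e (\<lambda>i. c * v i)"
proof -
  have "ip n (\<lambda>i. c * v i) u = c * ip n v u" for u unfolding ip_def by (simp add: sum_distrib_left mult_ac)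
  then show "recon n k e v \<Longrightarrow> recon n k e (\<lambda>i. c * v i)"
    unfolding recon_def by (simp add: sum_distrib_left mult_ac)
qed

lemma recon_zero: "recon n k e (\<lambda>i. 0)"
  unfolding recon_def ip_def by simp

lemma recon_sum:
  assumes "finite J" "\<And>j. j \<in> J \<Longrightarrow> recon n k e (f j)"
  shows "recon n k e (\<lambda>i. \<Sum>j\<in>J. c j * f j i)"
  using assms
proof (induction J rule: finite_induct)
  case empty then show ?case by (simp add: recon_zero)
next
  case (insert j J)
  then show ?case by (simp add: recon_add recon_scale)
qed

lemma matvec_zext:
  assumes "S \<subseteq> {..<p}"
  shows "matvec p X (restrict (zext S b) {..<p}) = (\<lambda>i. \<Sum>j\<in>S. b j * X i j)"
proof
  fix i
  have "matvec p X (restrict (zext S b) {..<p}) i = (\<Sum>j<p. if j \<in> S then b j * X i j else 0)"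
    unfolding matvec_restrict matvec_def zext_def by (intro sum.cong) auto
  also have "\<dots> = (\<Sum>j\<in>{..<p} \<inter> S. b j * X i j)"
    by (rule sum.inter_restrict[symmetric]) simp
  also have "{..<p} \<inter> S = S" using assms by auto
  finally show "matvec p X (restrict (zext S b) {..<p}) i = (\<Sum>j\<in>S. b j * X i j)" .
qed

lemma matvec_diff: "matvec p X (\<lambda>j. \<beta> j - \<beta>0 j) = (\<lambda>i. matvec p X \<beta> i - matvec p X \<beta>0 i)"
  unfolding matvec_def by (simp add: right_diff_distrib sum_subtractf)

lemma point:
  fixes n p :: nat and X :: "nat \<Rightarrow> nat \<Rightarrow> real" and Y \<beta>0 \<beta>s b :: "nat \<Rightarrow> real"
  assumes Sp: "S \<subseteq> {..<p}"
    and rc0: "recon n k e (matvec p X \<beta>s)" and rcc: "\<And>j. j \<in> S \<Longrightarrow> recon n k e (\<lambda>i. X i j)"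
    and t0: "0 \<le> t"
    and hyp: "vnorm n (matvec p X (\<lambda>j. restrict (zext S b) {..<p} j - \<beta>0 j))
               > 7 * vnorm n (matvec p X (\<lambda>j. \<beta>s j - \<beta>0 j)) + t"
  shows "lik n p X Y (restrict (zext S b) {..<p})
     \<le> lik n p X Y \<beta>s * exp (12/13 * (\<Sum>l<k. (ip n (e l) (\<lambda>i. Y i - matvec p X \<beta>0 i))\<^sup>2) - t\<^sup>2/16)"
proof -
  define m\<beta> where "m\<beta> = matvec p X (restrict (zext S b) {..<p})"
  define ms where "ms = matvec p X \<beta>s"
  define m0 where "m0 = matvec p X \<beta>0"
  define v where "v = (\<lambda>i. m\<beta> i - ms i)"
  define a where "a = (\<lambda>i. m0 i - ms i)"
  define \<epsilon> where "\<epsilon> = (\<lambda>i. Y i - m0 i)"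
  define w where "w = (\<lambda>i. Y i - ms i)"
  define x where "x = sqrt (ip n v v)"
  define A where "A = sqrt (ip n a a)"
  define R2 where "R2 = (\<Sum>l<k. (ip n (e l) \<epsilon>)\<^sup>2)"
  define R where "R = sqrt R2"
  have x0: "0 \<le> x" unfolding x_def using ip_self_nonneg[of n v] by simp
  have A0: "0 \<le> A" unfolding A_def using ip_self_nonneg[of n a] by simp
  have R2_0: "0 \<le> R2" unfolding R2_def by (simp add: sum_nonneg)
  have RR: "R * R = R2" using R2_0 unfolding R_def by simp
  have R0: "0 \<le> R" unfolding R_def using R2_0 by simp
  have hyp': "sqrt (ip n (\<lambda>i. m\<beta> i - m0 i) (\<lambda>i. m\<beta> i - m0 i)) > 7 * A + t"
  proof -
    have "ip n (\<lambda>i. ms i - m0 i) (\<lambda>i. ms i - m0 i) = ip n a a"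
      unfolding a_def using ip_neg[of n "\<lambda>i. ms i - m0 i"] by simp
    then show ?thesis using hyp unfolding vnorm_ip matvec_diff m\<beta>_def[symmetric] ms_def m0_def A_def by simp
  qed
  have tri: "sqrt (ip n (\<lambda>i. m\<beta> i - m0 i) (\<lambda>i. m\<beta> i - m0 i)) \<le> x + A"
  proof -
    have "(\<lambda>i. m\<beta> i - m0 i) = (\<lambda>i. v i + (\<lambda>i. - a i) i)" unfolding v_def a_def by auto
    then show ?thesis unfolding x_def A_def using vnorm_tri[of n v "\<lambda>i. - a i"] ip_neg[of n a] by simp
  qed
  have xA: "6 * A + t < x" using hyp' tri by linarith
  have rv: "recon n k e v"
  proof -
    have veq: "v = (\<lambda>i. (\<Sum>j\<in>S. b j * X i j) + (-1) * ms i)"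
      unfolding v_def m\<beta>_def matvec_zext[OF Sp] by auto
    have r1: "recon n k e (\<lambda>i. \<Sum>j\<in>S. b j * X i j)"
      using Sp finite_subset by (intro recon_sum rcc) auto
    have r2: "recon n k e (\<lambda>i. (-1) * ms i)"
      unfolding ms_def by (rule recon_scale[OF rc0])
    show ?thesis unfolding veq by (rule recon_add[OF r1 r2])
  qed
  have ipev: "ip n \<epsilon> v \<le> x * R"
  proof -
    have "ip n \<epsilon> v = (\<Sum>l<k. ip n v (e l) * ip n \<epsilon> (e l))" by (rule recon_ip[OF rv])
    also have "\<dots> \<le> sqrt (\<Sum>l<k. (ip n v (e l))\<^sup>2) * sqrt (\<Sum>l<k. (ip n \<epsilon> (e l))\<^sup>2)"
      by (rule cs_sum)
    also have "(\<Sum>l<k. (ip n v (e l))\<^sup>2) = ip n v v"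
      using recon_ip[OF rv, of v] by (simp add: power2_eq_square)
    also have "(\<Sum>l<k. (ip n \<epsilon> (e l))\<^sup>2) = R2" unfolding R2_def by (simp add: ip_sym)
    finally show ?thesis unfolding x_def R_def .
  qed
  have ipav: "ip n a v \<le> A * x" unfolding A_def x_def by (rule ip_cs)
  have wv: "(\<lambda>i. Y i - m\<beta> i) = (\<lambda>i. w i - v i)" unfolding w_def v_def by auto
  have we: "w = (\<lambda>i. \<epsilon> i + a i)" unfolding w_def \<epsilon>_def a_def by auto
  have lik1: "lik n p X Y (restrict (zext S b) {..<p}) = exp (- (ip n w w - 2 * ip n w v + ip n v v) / 2)"
    unfolding lik_ip m\<beta>_def[symmetric] wv ip_expand ..
  have lik2: "lik n p X Y \<beta>s = exp (- ip n w w / 2)"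
    unfolding lik_ip ms_def[symmetric] w_def ..
  have ipwv: "ip n w v = ip n \<epsilon> v + ip n a v" unfolding we by (rule ip_add_left)
  have xx: "ip n v v = x * x" unfolding x_def using ip_self_nonneg[of n v] by simp
  have expo: "ip n w v - ip n v v / 2 \<le> 12/13 * R2 - t\<^sup>2/16"
  proof -
    have "ip n w v - ip n v v / 2 \<le> x * R + A * x - x * x / 2" using ipwv ipev ipav xx by linarith
    also have "\<dots> \<le> x * R - x * x / 3"
    proof -
      have "6 * A \<le> x" using xA t0 by linarith
      then have "6 * A * x \<le> x * x" using x0 by (rule mult_right_mono)
      then have "A * x \<le> x * x / 6" by simp
      then show ?thesis by linarith
    qed
    also have "\<dots> \<le> 12/13 * (R * R) - x * x / 16"
    proof -
      have "0 \<le> 12/13 * ((R - 13/24 * x) * (R - 13/24 * x))" by simp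
      moreover have "12/13 * ((R - 13/24 * x) * (R - 13/24 * x)) = 12/13 * (R * R) - x * x / 16 - (x * R - x * x / 3)"
        by (simp add: algebra_simps)
      ultimately show ?thesis by linarith
    qed
    also have "\<dots> \<le> 12/13 * R2 - t\<^sup>2/16"
    proof -
      have "t * t \<le> x * x" using xA t0 A0 by (intro mult_mono) auto
      then show ?thesis unfolding RR by (simp add: power2_eq_square)
    qed
    finally show ?thesis .
  qed
  have "lik n p X Y (restrict (zext S b) {..<p}) = lik n p X Y \<beta>s * exp (ip n w v - ip n v v / 2)"
    unfolding lik1 lik2 by (simp add: exp_add[symmetric] field_simps)
  also have "\<dots> \<le> lik n p X Y \<beta>s * exp (12/13 * R2 - t\<^sup>2/16)"
    using expo by (intro mult_left_mono) (auto simp: lik_def)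
  finally show ?thesis unfolding R2_def \<epsilon>_def m0_def .
qed



lemma lik_meas: "(\<lambda>\<beta>. lik n p X Y \<beta>) \<in> borel_measurable (PiM {..<p} (\<lambda>_. borel))"
  unfolding lik_ip ip_def matvec_def by measurable

lemma sum_pow_card:
  fixes f :: "nat \<Rightarrow> 'a::comm_ring_1"
  shows "(\<Sum>S\<in>Pow {..<p}. f (card S)) = (\<Sum>s\<le>p. of_nat (p choose s) * f s)"
proof -
  have Pw: "Pow {..<p} = (\<Union>s\<in>{..p}. {S. S \<subseteq> {..<p} \<and> card S = s})"
  proof (rule set_eqI)
    fix S show "S \<in> Pow {..<p} \<longleftrightarrow> S \<in> (\<Union>s\<in>{..p}. {S. S \<subseteq> {..<p} \<and> card S = s})"
      using card_mono[of "{..<p}" S] by auto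
  qed
  have "(\<Sum>S\<in>Pow {..<p}. f (card S)) = (\<Sum>s\<le>p. \<Sum>S\<in>{S. S \<subseteq> {..<p} \<and> card S = s}. f (card S))"
    unfolding Pw by (rule sum.UNION_disjoint) (auto simp: subsets_fin)
  also have "\<dots> = (\<Sum>s\<le>p. of_nat (p choose s) * f s)"
  proof (rule sum.cong[OF refl])
    fix s
    have "(\<Sum>S\<in>{S. S \<subseteq> {..<p} \<and> card S = s}. f (card S)) = (\<Sum>S\<in>{S. S \<subseteq> {..<p} \<and> card S = s}. f s)"
      by (rule sum.cong) auto
    also have "\<dots> = of_nat (p choose s) * f s" by (simp add: card_subsets)
    finally show "(\<Sum>S\<in>{S. S \<subseteq> {..<p} \<and> card S = s}. f (card S)) = of_nat (p choose s) * f s" .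
  qed
  finally show ?thesis .
qed

lemma Cpi_ge1:
  assumes "set_pmf \<pi> \<subseteq> {..p}"
  shows "1 \<le> C_pi p \<pi>"
proof -
  have "1 = (\<Sum>s\<le>p. pmf \<pi> s)" using sum_pmf_eq_1[of "{..p}" \<pi>] assms by simp
  also have "\<dots> \<le> C_pi p \<pi>"
    unfolding C_pi_def
  proof (rule sum_mono)
    fix s assume s: "s \<in> {..p}"
    have p1: "pmf \<pi> s \<le> 1" by (rule pmf_le_1)
    have "pmf \<pi> s \<le> sqrt (pmf \<pi> s)"
    proof -
      have "pmf \<pi> s * pmf \<pi> s \<le> pmf \<pi> s * 1" by (intro mult_left_mono p1) simp
      then have "(pmf \<pi> s)\<^sup>2 \<le> pmf \<pi> s" by (simp add: power2_eq_square)
      then show ?thesis by (rule real_le_rsqrt)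
    qed
    also have "\<dots> \<le> 9 ^ s * sqrt (real (p choose s)) * sqrt (pmf \<pi> s)"
    proof -
      have "1 \<le> real (p choose s)" using s by (simp add: Suc_le_eq zero_less_binomial)
      then have "1 \<le> sqrt (real (p choose s))" by simp
      moreover have "(1::real) \<le> 9 ^ s" by simp
      ultimately have "1 \<le> 9 ^ s * sqrt (real (p choose s))"
        using mult_mono[of 1 "9^s" 1 "sqrt (real (p choose s))"] by simp
      then show ?thesis using mult_right_mono[of 1 _ "sqrt (pmf \<pi> s)"] by simp
    qed
    finally show "pmf \<pi> s \<le> 9 ^ s * sqrt (real (p choose s)) * sqrt (pmf \<pi> s)" .
  qed
  finally show ?thesis .
qed

lemma sum_w_le_Cpi:
  assumes "set_pmf \<pi> \<subseteq> {..p}"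
  shows "(\<Sum>S\<in>Pow {..<p}. sqrt (pmf \<pi> (card S) / real (p choose card S)) * sqrt 13 ^ card S) \<le> C_pi p \<pi>"
proof -
  have "(\<Sum>S\<in>Pow {..<p}. sqrt (pmf \<pi> (card S) / real (p choose card S)) * sqrt 13 ^ card S)
      = (\<Sum>s\<le>p. real (p choose s) * (sqrt (pmf \<pi> s / real (p choose s)) * sqrt 13 ^ s))"
    by (rule sum_pow_card)
  also have "\<dots> \<le> C_pi p \<pi>"
    unfolding C_pi_def
  proof (rule sum_mono)
    fix s assume s: "s \<in> {..p}"
    define c where "c = real (p choose s)"
    have c1: "1 \<le> c" using s by (simp add: c_def Suc_le_eq zero_less_binomial)
    have "c * sqrt (pmf \<pi> s / c) = sqrt c * sqrt (pmf \<pi> s)"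
    proof -
      have "c * sqrt (pmf \<pi> s / c) = (c / sqrt c) * sqrt (pmf \<pi> s)"
        using c1 by (simp add: real_sqrt_divide)
      also have "c / sqrt c = sqrt c" using c1 by (simp add: real_div_sqrt)
      finally show ?thesis .
    qed
    moreover have "sqrt 13 ^ s \<le> (9::real) ^ s"
    proof (rule power_mono)
      have "sqrt 13 \<le> sqrt ((9::real)\<^sup>2)" by (rule real_sqrt_le_mono) simp
      then show "sqrt 13 \<le> (9::real)" by simp
    qed simp
    ultimately show "c * (sqrt (pmf \<pi> s / c) * sqrt 13 ^ s) \<le> 9 ^ s * sqrt c * sqrt (pmf \<pi> s)"
    proof -
      assume e: "c * sqrt (pmf \<pi> s / c) = sqrt c * sqrt (pmf \<pi> s)" and le: "sqrt 13 ^ s \<le> (9::real) ^ s"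
      have "c * (sqrt (pmf \<pi> s / c) * sqrt 13 ^ s) = (sqrt c * sqrt (pmf \<pi> s)) * sqrt 13 ^ s"
        using e by (simp add: mult.assoc[symmetric])
      also have "\<dots> \<le> (sqrt c * sqrt (pmf \<pi> s)) * 9 ^ s"
        using c1 by (intro mult_left_mono le) simp
      finally show ?thesis by (simp add: mult_ac)
    qed
  qed
  finally show ?thesis .
qed

lemma prior_le1:
  assumes "set_pmf \<pi> \<subseteq> {..p}" "g \<in> borel_measurable lborel" "(\<integral>\<^sup>+ x. ennreal (g x) \<partial>lborel) = 1"
    and f: "f \<in> borel_measurable (PiM {..<p} (\<lambda>_. borel))" and f1: "\<And>x. f x \<le> 1"
  shows "(\<integral>\<^sup>+\<beta>. f \<beta> \<partial>prior p \<pi> g) \<le> 1"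
proof -
  have "(\<integral>\<^sup>+\<beta>. f \<beta> \<partial>prior p \<pi> g)
       = (\<Sum>S\<in>Pow {..<p}. (\<integral>\<^sup>+b. f (restrict (zext S b) {..<p}) \<partial>G_S g S) * ennreal (pmf (subset_pmf p \<pi>) S))"
    by (rule prior_nn[OF assms(1-3) f])
  also have "\<dots> \<le> (\<Sum>S\<in>Pow {..<p}. 1 * ennreal (pmf (subset_pmf p \<pi>) S))"
  proof (intro sum_mono mult_right_mono)
    fix S
    interpret prob_space "G_S g S" by (rule prob_G[OF assms(2,3)])
    have "(\<integral>\<^sup>+b. f (restrict (zext S b) {..<p}) \<partial>G_S g S) \<le> (\<integral>\<^sup>+b. 1 \<partial>G_S g S)"
      by (intro nn_integral_mono f1)
    then show "(\<integral>\<^sup>+b. f (restrict (zext S b) {..<p}) \<partial>G_S g S) \<le> 1" by (simp add: emeasure_space_1)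
  qed simp
  also have "\<dots> = (\<integral>\<^sup>+S. 1 \<partial>measure_pmf (subset_pmf p \<pi>))"
    using set_subset_pmf[OF assms(1)] by (subst nn_integral_measure_pmf_support[of "Pow {..<p}"]) auto
  also have "\<dots> = 1" by (simp add: measure_pmf.emeasure_space_1)
  finally show ?thesis .
qed



lemma den_facts:
  assumes pi: "set_pmf \<pi> \<subseteq> {..p}" and gm: "g \<in> borel_measurable lborel"
    and g1: "(\<integral>\<^sup>+ x. ennreal (g x) \<partial>lborel) = 1" and sym: "\<And>x. g (- x) = g x"
    and Dfin: "D_beta n \<pi> g X p \<beta>s \<noteq> \<infinity>"
  shows "0 < real_of_ereal (D_beta n \<pi> g X p \<beta>s)"
    and "ennreal (lik n p X Y \<beta>s / real_of_ereal (D_beta n \<pi> g X p \<beta>s))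
          \<le> (\<integral>\<^sup>+\<beta>. ennreal (lik n p X Y \<beta>) \<partial>prior p \<pi> g)"
proof -
  define S where "S = supp p \<beta>s"
  define G where "G = G_S g S"
  define Q where "Q = distr G (PiM S (\<lambda>_. borel)) (\<lambda>b. restrict (\<lambda>i. b i + \<beta>s i) S)"
  define K where "K = KL Q G"
  define M where "M = (\<integral>\<^sup>+ b. ennreal ((vnorm n (matvec p X (zext S b)))\<^sup>2) \<partial>G)"
  have Deq: "D_beta n \<pi> g X p \<beta>s = (if pmf \<pi> (card S) = 0 \<or> K = \<infinity> \<or> M = \<infinity> then \<infinity>
        else ereal (real (p choose card S) / pmf \<pi> (card S) * exp (real_of_ereal K + enn2real M / 2)))"
    unfolding D_beta_def Let_def S_def G_def Q_def K_def M_def by simp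
  have pm: "pmf \<pi> (card S) \<noteq> 0" and Kf: "K \<noteq> \<infinity>" and Mf: "M \<noteq> \<infinity>"
    using Dfin unfolding Deq by (auto split: if_splits)
  have ac: "absolutely_continuous G Q" and int: "integrable Q (entropy_density (exp 1) G Q)"
    and Kv: "K = ereal (KL_divergence (exp 1) G Q)"
    using Kf unfolding K_def KL_def by (auto split: if_splits)
  define Dr where "Dr = real (p choose card S) / pmf \<pi> (card S) * exp (KL_divergence (exp 1) G Q + enn2real M / 2)"
  have Dreq: "real_of_ereal (D_beta n \<pi> g X p \<beta>s) = Dr"
    unfolding Deq Dr_def using pm Kf Mf Kv by simp
  have Sp: "S \<subseteq> {..<p}" unfolding S_def supp_def by auto
  have cS: "card S \<le> p" using card_mono[OF _ Sp] by simp
  have bpos: "0 < real (p choose card S)" using cS by (simp add: zero_less_binomial)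
  have ppos: "0 < pmf \<pi> (card S)" using pm pmf_nonneg[of \<pi> "card S"] by linarith
  show Dpos: "0 < real_of_ereal (D_beta n \<pi> g X p \<beta>s)" unfolding Dreq Dr_def using bpos ppos by simp
  have w: "pmf (subset_pmf p \<pi>) S = pmf \<pi> (card S) / real (p choose card S)"
    by (rule pmf_subset_pmf[OF pi Sp])
  have "ennreal (lik n p X Y \<beta>s * exp (- KL_divergence (exp 1) G Q - enn2real M / 2))
     \<le> (\<integral>\<^sup>+ b. ennreal (lik n p X Y (restrict (zext S b) {..<p})) \<partial>G)"
    unfolding S_def G_def Q_def M_def by (rule den_G[OF gm g1 sym]) (use ac int Mf in \<open>simp_all add: S_def G_def Q_def M_def\<close>)
  then have "ennreal (lik n p X Y \<beta>s * exp (- KL_divergence (exp 1) G Q - enn2real M / 2)) * ennreal (pmf (subset_pmf p \<pi>) S)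
     \<le> (\<integral>\<^sup>+ b. ennreal (lik n p X Y (restrict (zext S b) {..<p})) \<partial>G) * ennreal (pmf (subset_pmf p \<pi>) S)"
    by (rule mult_right_mono) simp
  also have "\<dots> \<le> (\<Sum>T\<in>Pow {..<p}. (\<integral>\<^sup>+b. ennreal (lik n p X Y (restrict (zext T b) {..<p})) \<partial>G_S g T) * ennreal (pmf (subset_pmf p \<pi>) T))"
    unfolding G_def using Sp by (intro member_le_sum) auto
  also have "\<dots> = (\<integral>\<^sup>+\<beta>. ennreal (lik n p X Y \<beta>) \<partial>prior p \<pi> g)"
    by (rule prior_nn[OF pi gm g1, symmetric]) (use lik_meas in measurable)
  also have "ennreal (lik n p X Y \<beta>s * exp (- KL_divergence (exp 1) G Q - enn2real M / 2)) * ennreal (pmf (subset_pmf p \<pi>) S)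
      = ennreal (lik n p X Y \<beta>s / real_of_ereal (D_beta n \<pi> g X p \<beta>s))"
  proof -
    have "lik n p X Y \<beta>s * exp (- KL_divergence (exp 1) G Q - enn2real M / 2) * (pmf \<pi> (card S) / real (p choose card S))
        = lik n p X Y \<beta>s / Dr"
    proof -
      have "exp (- KL_divergence (exp 1) G Q - enn2real M / 2) = inverse (exp (KL_divergence (exp 1) G Q + enn2real M / 2))"
        by (simp add: exp_minus[symmetric])
      then show ?thesis unfolding Dr_def using bpos ppos by (simp add: field_simps)
    qed
    moreover have "0 \<le> lik n p X Y \<beta>s * exp (- KL_divergence (exp 1) G Q - enn2real M / 2)"
      by (simp add: lik_def)
    ultimately show ?thesis unfolding w Dreq by (simp add: ennreal_mult'[symmetric])
  qed
  finally show "ennreal (lik n p X Y \<beta>s / real_of_ereal (D_beta n \<pi> g X p \<beta>s))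
          \<le> (\<integral>\<^sup>+\<beta>. ennreal (lik n p X Y \<beta>) \<partial>prior p \<pi> g)" .
qed



lemma sqrt_sum_le:
  assumes "finite A" "\<And>a. a \<in> A \<Longrightarrow> 0 \<le> f a"
  shows "sqrt (\<Sum>a\<in>A. f a) \<le> (\<Sum>a\<in>A. sqrt (f a))"
  using assms
proof (induction A rule: finite_induct)
  case empty then show ?case by simp
next
  case (insert x A)
  have "sqrt (\<Sum>a\<in>insert x A. f a) = sqrt (f x + (\<Sum>a\<in>A. f a))" using insert by simp
  also have "\<dots> \<le> sqrt (f x) + sqrt (\<Sum>a\<in>A. f a)"
    using insert by (intro sqrt_add_le_add_sqrt) (auto intro: sum_nonneg)
  also have "\<dots> \<le> sqrt (f x) + (\<Sum>a\<in>A. sqrt (f a))" using insert by simp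
  finally show ?case using insert by simp
qed

lemma sqrt_exp: "sqrt (exp x) = exp (x / 2)"
proof -
  have "exp (x / 2) * exp (x / 2) = exp x" by (simp add: exp_add[symmetric])
  then show ?thesis by (metis exp_ge_zero real_sqrt_abs2 abs_of_nonneg)
qed

lemma lik_le1: "lik n p X Y \<beta> \<le> 1"
  unfolding lik_def by simp

lemma lik_pos: "0 < lik n p X Y \<beta>"
  unfolding lik_def by simp

lemma post_pointwise:
  fixes n p :: nat and X :: "nat \<Rightarrow> nat \<Rightarrow> real" and Y \<beta>0 \<beta>s :: "nat \<Rightarrow> real"
  assumes pi: "set_pmf \<pi> \<subseteq> {..p}" and gm: "g \<in> borel_measurable lborel"
    and g1: "(\<integral>\<^sup>+ x. ennreal (g x) \<partial>lborel) = 1" and sym: "\<And>x. g (- x) = g x"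
    and Dfin: "D_beta n \<pi> g X p \<beta>s \<noteq> \<infinity>"
    and t0: "0 \<le> t"
    and Bdef: "B = {\<beta>. vnorm n (matvec p X (\<lambda>j. \<beta> j - \<beta>0 j)) > 7 * vnorm n (matvec p X (\<lambda>j. \<beta>s j - \<beta>0 j)) + t}"
    and basis: "\<And>S. S \<in> Pow {..<p} \<Longrightarrow> recon n (kk S) (ee S) (matvec p X \<beta>s) \<and> (\<forall>j\<in>S. recon n (kk S) (ee S) (\<lambda>i. X i j))"
  shows "posterior n p X (prior p \<pi> g) Y B
    \<le> (\<Sum>S\<in>Pow {..<p}. sqrt (real_of_ereal (D_beta n \<pi> g X p \<beta>s) * (pmf \<pi> (card S) / real (p choose card S)))
          * exp (6/13 * (\<Sum>l<kk S. (ip n (ee S l) (\<lambda>i. Y i - matvec p X \<beta>0 i))\<^sup>2) - t\<^sup>2/32))"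
    (is "_ \<le> ?H")
proof -
  define Dr where "Dr = real_of_ereal (D_beta n \<pi> g X p \<beta>s)"
  define PR where "PR = prior p \<pi> g"
  define w where "w = (\<lambda>S::nat set. pmf \<pi> (card S) / real (p choose card S))"
  define E where "E = (\<lambda>S. exp (12/13 * (\<Sum>l<kk S. (ip n (ee S l) (\<lambda>i. Y i - matvec p X \<beta>0 i))\<^sup>2) - t\<^sup>2/16))"
  define L where "L = (\<lambda>\<beta>. lik n p X Y \<beta>)"
  have Dpos: "0 < Dr" unfolding Dr_def by (rule den_facts(1)[OF pi gm g1 sym Dfin])
  have denl: "ennreal (L \<beta>s / Dr) \<le> (\<integral>\<^sup>+\<beta>. ennreal (L \<beta>) \<partial>PR)"
    unfolding Dr_def PR_def L_def by (rule den_facts(2)[OF pi gm g1 sym Dfin])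
  have sP: "sets PR = sets (PiM {..<p} (\<lambda>_. borel))" unfolding PR_def by (rule sets_prior[OF gm g1])
  have measP: "measurable PR N = measurable (PiM {..<p} (\<lambda>_. borel)) N" for N :: "'x measure"
    by (rule measurable_cong_sets[OF sP refl])
  have Lm: "L \<in> borel_measurable PR" unfolding measP L_def by (rule lik_meas)
  have Lm': "(\<lambda>\<beta>. ennreal (L \<beta>)) \<in> borel_measurable (PiM {..<p} (\<lambda>_. borel))"
    using lik_meas unfolding L_def by measurable
  have den1: "(\<integral>\<^sup>+\<beta>. ennreal (L \<beta>) \<partial>PR) \<le> 1"
    unfolding PR_def by (rule prior_le1[OF pi gm g1 Lm']) (simp add: L_def lik_le1)
  define Den where "Den = (\<integral>\<beta>. L \<beta> \<partial>PR)"
  have Den_eq: "Den = enn2real (\<integral>\<^sup>+\<beta>. ennreal (L \<beta>) \<partial>PR)"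
    unfolding Den_def by (rule integral_eq_nn_integral[OF Lm]) (simp add: L_def lik_def)
  have Den_ge: "L \<beta>s / Dr \<le> Den"
  proof -
    have "enn2real (ennreal (L \<beta>s / Dr)) \<le> enn2real (\<integral>\<^sup>+\<beta>. ennreal (L \<beta>) \<partial>PR)"
      using denl den1 by (intro enn2real_mono) (auto simp: top_unique intro: le_less_trans[OF _ ennreal_less_top[of 1]])
    then show ?thesis unfolding Den_eq using Dpos by (simp add: L_def lik_def)
  qed
  have Lbs: "0 < L \<beta>s" unfolding L_def by (rule lik_pos)
  have Dpos': "0 < Den" using Den_ge Lbs Dpos by (smt (verit) divide_pos_pos)
  have Hnn: "0 \<le> ?H" using Dpos unfolding Dr_def by (intro sum_nonneg mult_nonneg_nonneg) auto
  define f where "f = (\<lambda>\<beta>. indicator B \<beta> * L \<beta>)"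
  have post_eq: "posterior n p X (prior p \<pi> g) Y B = (\<integral>\<beta>. f \<beta> \<partial>PR) / Den"
    unfolding posterior_def f_def Den_def PR_def L_def ..
  show ?thesis
  proof (cases "integrable PR f")
    case False
    then have "(\<integral>\<beta>. f \<beta> \<partial>PR) = 0" by (rule not_integrable_integral_eq)
    then show ?thesis using post_eq Hnn by simp
  next
    case True
    have fm: "f \<in> borel_measurable PR" using True by auto
    have fm': "(\<lambda>\<beta>. ennreal (f \<beta>)) \<in> borel_measurable (PiM {..<p} (\<lambda>_. borel))"
      using fm unfolding measP by measurable
    have f0: "0 \<le> f \<beta>" for \<beta> unfolding f_def L_def by (simp add: lik_def)
    have fL: "f \<beta> \<le> L \<beta>" for \<beta> unfolding f_def L_def by (simp add: indicator_def lik_def)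
    define Num where "Num = (\<integral>\<beta>. f \<beta> \<partial>PR)"
    have Num_eq: "Num = enn2real (\<integral>\<^sup>+\<beta>. ennreal (f \<beta>) \<partial>PR)"
      unfolding Num_def by (rule integral_eq_nn_integral[OF fm]) (simp add: f0)
    have Num0: "0 \<le> Num" unfolding Num_eq by simp
    have NumDen: "Num \<le> Den"
    proof -
      have "(\<integral>\<^sup>+\<beta>. ennreal (f \<beta>) \<partial>PR) \<le> (\<integral>\<^sup>+\<beta>. ennreal (L \<beta>) \<partial>PR)"
        by (intro nn_integral_mono) (simp add: fL ennreal_leI)
      then show ?thesis unfolding Num_eq Den_eq using den1
        by (intro enn2real_mono) (auto intro: le_less_trans[OF _ ennreal_less_top[of 1]])
    qed
    have Sbound: "(\<integral>\<^sup>+b. ennreal (f (restrict (zext S b) {..<p})) \<partial>G_S g S) \<le> ennreal (L \<beta>s * E S)"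
      if S: "S \<in> Pow {..<p}" for S
    proof -
      interpret prob_space "G_S g S" by (rule prob_G[OF gm g1])
      have "f (restrict (zext S b) {..<p}) \<le> L \<beta>s * E S" for b
      proof (cases "restrict (zext S b) {..<p} \<in> B")
        case True
        have "L (restrict (zext S b) {..<p}) \<le> L \<beta>s * E S"
          unfolding L_def E_def
          by (rule point) (use S basis[OF S] t0 True Bdef in auto)
        then show ?thesis using True unfolding f_def by simp
      next
        case False
        then show ?thesis unfolding f_def E_def using Lbs by simp
      qed
      then have "(\<integral>\<^sup>+b. ennreal (f (restrict (zext S b) {..<p})) \<partial>G_S g S) \<le> (\<integral>\<^sup>+b. ennreal (L \<beta>s * E S) \<partial>G_S g S)"
        by (intro nn_integral_mono ennreal_leI) auto
      then show ?thesis by (simp add: emeasure_space_1)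
    qed
    have "(\<integral>\<^sup>+\<beta>. ennreal (f \<beta>) \<partial>PR)
        = (\<Sum>S\<in>Pow {..<p}. (\<integral>\<^sup>+b. ennreal (f (restrict (zext S b) {..<p})) \<partial>G_S g S) * ennreal (pmf (subset_pmf p \<pi>) S))"
      unfolding PR_def by (rule prior_nn[OF pi gm g1 fm'])
    also have "\<dots> \<le> (\<Sum>S\<in>Pow {..<p}. ennreal (L \<beta>s * E S) * ennreal (w S))"
    proof (rule sum_mono)
      fix S assume S: "S \<in> Pow {..<p}"
      have e: "pmf (subset_pmf p \<pi>) S = w S" unfolding w_def using S by (intro pmf_subset_pmf[OF pi]) auto
      show "(\<integral>\<^sup>+b. ennreal (f (restrict (zext S b) {..<p})) \<partial>G_S g S) * ennreal (pmf (subset_pmf p \<pi>) S)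
          \<le> ennreal (L \<beta>s * E S) * ennreal (w S)"
        unfolding e by (rule mult_right_mono[OF Sbound[OF S]]) simp
    qed
    also have "\<dots> = ennreal (\<Sum>S\<in>Pow {..<p}. L \<beta>s * E S * w S)"
      using Lbs by (subst sum_ennreal[symmetric]) (auto simp: w_def E_def ennreal_mult'[symmetric] intro!: sum.cong)
    finally have nb: "(\<integral>\<^sup>+\<beta>. ennreal (f \<beta>) \<partial>PR) \<le> ennreal (\<Sum>S\<in>Pow {..<p}. L \<beta>s * E S * w S)" .
    define Z where "Z = (\<Sum>S\<in>Pow {..<p}. E S * w S)"
    have Z0: "0 \<le> Z" unfolding Z_def E_def w_def by (intro sum_nonneg mult_nonneg_nonneg) auto
    have NumZ: "Num \<le> L \<beta>s * Z"
    proof -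
      have "Num \<le> enn2real (ennreal (\<Sum>S\<in>Pow {..<p}. L \<beta>s * E S * w S))"
        unfolding Num_eq by (rule enn2real_mono[OF nb]) simp
      also have "\<dots> = L \<beta>s * Z" unfolding Z_def
        using Lbs by (subst enn2real_ennreal) (auto simp: sum_distrib_left mult_ac E_def w_def intro!: sum_nonneg)
      finally show ?thesis .
    qed
    have p1: "Num / Den \<le> 1" using NumDen Dpos' by simp
    have p2: "Num / Den \<le> Dr * Z"
    proof -
      have "Num / Den \<le> (L \<beta>s * Z) / (L \<beta>s / Dr)"
        using NumZ Den_ge Num0 Dpos' Lbs Dpos Z0 by (intro frac_le) auto
      also have "\<dots> = Dr * Z" using Lbs Dpos by (simp add: field_simps)
      finally show ?thesis .
    qed
    have "Num / Den \<le> sqrt (Dr * Z)"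
    proof (cases "Dr * Z \<le> 1")
      case True
      have "(Dr * Z) * (Dr * Z) \<le> (Dr * Z) * 1"
        using True Dpos Z0 by (intro mult_left_mono) auto
      then have "Dr * Z \<le> sqrt (Dr * Z)"
        by (intro real_le_rsqrt) (simp add: power2_eq_square)
      then show ?thesis using p2 by linarith
    next
      case False
      then have "1 \<le> sqrt (Dr * Z)" by simp
      then show ?thesis using p1 by linarith
    qed
    also have "\<dots> = sqrt (\<Sum>S\<in>Pow {..<p}. Dr * E S * w S)"
      unfolding Z_def by (simp add: sum_distrib_left mult_ac)
    also have "\<dots> \<le> (\<Sum>S\<in>Pow {..<p}. sqrt (Dr * E S * w S))"
      using Dpos by (intro sqrt_sum_le) (auto simp: E_def w_def)
    also have "\<dots> = ?H"
    proof (rule sum.cong[OF refl])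
      fix S
      have "sqrt (Dr * E S * w S) = sqrt (Dr * w S) * sqrt (E S)" by (simp add: real_sqrt_mult mult_ac)
      also have "sqrt (E S) = exp (6/13 * (\<Sum>l<kk S. (ip n (ee S l) (\<lambda>i. Y i - matvec p X \<beta>0 i))\<^sup>2) - t\<^sup>2/32)"
        unfolding E_def sqrt_exp by simp
      finally show "sqrt (Dr * E S * w S) = sqrt (real_of_ereal (D_beta n \<pi> g X p \<beta>s) * (pmf \<pi> (card S) / real (p choose card S)))
          * exp (6/13 * (\<Sum>l<kk S. (ip n (ee S l) (\<lambda>i. Y i - matvec p X \<beta>0 i))\<^sup>2) - t\<^sup>2/32)"
        unfolding Dr_def w_def .
    qed
    finally show ?thesis using post_eq unfolding Num_def by simp
  qed
qed



lemma final_arith: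
  fixes C Dr r t :: real
  assumes C1: "1 \<le> C" and D1: "1 \<le> Dr" and r1: "1 \<le> r"
    and t: "t = 4 * sqrt (ln (C\<^sup>2 * Dr)) + 8 * sqrt r"
  shows "sqrt 13 * sqrt Dr * exp (- t\<^sup>2 / 32) * C \<le> 4 * exp (- r)"
proof -
  define L where "L = ln (C\<^sup>2 * Dr)"
  have C2: "1 \<le> C\<^sup>2" using C1 by (simp add: one_le_power)
  have CD1: "1 \<le> C\<^sup>2 * Dr" using mult_mono[OF C2 D1] by simp
  have L0: "0 \<le> L" unfolding L_def using CD1 by simp
  have t2: "16 * L + 64 * r \<le> t\<^sup>2"
  proof -
    have tt: "t = 4 * sqrt L + 8 * sqrt r" unfolding t L_def ..
    have "t\<^sup>2 = 16 * (sqrt L * sqrt L) + 64 * sqrt L * sqrt r + 64 * (sqrt r * sqrt r)"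
      unfolding tt power2_eq_square by algebra
    moreover have "sqrt L * sqrt L = L" using L0 by simp
    moreover have "sqrt r * sqrt r = r" using r1 by simp
    ultimately have "t\<^sup>2 = 16 * L + 64 * sqrt L * sqrt r + 64 * r" by (simp only:)
    then show ?thesis using L0 r1 by simp
  qed
  have e1: "exp (- t\<^sup>2 / 32) \<le> exp (- L / 2) * exp (- 2 * r)"
    using t2 by (simp add: exp_add[symmetric])
  have eL: "exp (L / 2) = C * sqrt Dr"
  proof -
    have "exp (L / 2) = sqrt (exp L)" by (simp add: sqrt_exp)
    also have "exp L = C\<^sup>2 * Dr" unfolding L_def using CD1 by simp
    also have "sqrt (C\<^sup>2 * Dr) = C * sqrt Dr" using C1 by (simp add: real_sqrt_mult)
    finally show ?thesis .
  qed
  have "sqrt 13 * sqrt Dr * exp (- t\<^sup>2 / 32) * C \<le> sqrt 13 * sqrt Dr * (exp (- L / 2) * exp (- 2 * r)) * C"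
    using e1 C1 D1 by (intro mult_right_mono mult_left_mono) auto
  also have "\<dots> = sqrt 13 * exp (- 2 * r) * ((C * sqrt Dr) * exp (- L / 2))" by (simp add: mult_ac)
  also have "(C * sqrt Dr) * exp (- L / 2) = 1" unfolding eL[symmetric] by (simp add: exp_add[symmetric])
  also have "sqrt 13 * exp (- 2 * r) * 1 \<le> 4 * exp (- r)"
  proof -
    have "sqrt 13 \<le> sqrt ((4::real)\<^sup>2)" by (rule real_sqrt_le_mono) simp
    then have s4: "sqrt 13 \<le> (4::real)" by simp
    have e2: "exp (- 2 * r) \<le> exp (- r)" using r1 by (subst exp_le_cancel_iff) linarith
    have "sqrt 13 * exp (- 2 * r) \<le> 4 * exp (- r)"
      by (rule mult_mono[OF s4 e2]) auto
    then show ?thesis by simp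
  qed
  finally show ?thesis .
qed



lemma main_case:
  fixes n p :: nat and X :: "nat \<Rightarrow> nat \<Rightarrow> real" and \<pi> :: "nat pmf" and g :: "real \<Rightarrow> real"
    and \<beta>0 \<beta>s :: "nat \<Rightarrow> real" and r :: real
  assumes pi: "set_pmf \<pi> \<subseteq> {..p}" and gm: "g \<in> borel_measurable lborel"
    and g1: "(\<integral>\<^sup>+ x. ennreal (g x) \<partial>lborel) = 1" and sym: "\<And>x. g (- x) = g x" and r1: "1 \<le> r"
  shows "(\<integral>Y. posterior n p X (prior p \<pi> g) Y (rate_set n p \<pi> g X \<beta>0 \<beta>s r) \<partial>(data_law n p X \<beta>0))
       \<le> 4 * exp (- r)"
proof (cases "D_beta n \<pi> g X p \<beta>s = \<infinity>")
  case True
  then have "rate_set n p \<pi> g X \<beta>0 \<beta>s r = {}" unfolding rate_set_def Let_def by simp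
  then have "posterior n p X (prior p \<pi> g) Y (rate_set n p \<pi> g X \<beta>0 \<beta>s r) = 0" for Y
    unfolding posterior_def by simp
  then show ?thesis by simp
next
  case Dfin: False
  define Dr where "Dr = real_of_ereal (D_beta n \<pi> g X p \<beta>s)"
  define C where "C = C_pi p \<pi>"
  define t where "t = 4 * sqrt (ln (C\<^sup>2 * Dr)) + 8 * sqrt r"
  define m0 where "m0 = matvec p X \<beta>0"
  have Dpos: "0 < Dr" unfolding Dr_def by (rule den_facts(1)[OF pi gm g1 sym Dfin])
  have C1: "1 \<le> C" unfolding C_def by (rule Cpi_ge1[OF pi])
  have D1: "1 \<le> Dr"
  proof -
    have l1: "lik n p X (matvec p X \<beta>s) \<beta>s = 1" unfolding lik_ip ip_def by simp
    have "ennreal (1 / Dr) \<le> (\<integral>\<^sup>+\<beta>. ennreal (lik n p X (matvec p X \<beta>s) \<beta>) \<partial>prior p \<pi> g)"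
      using den_facts(2)[OF pi gm g1 sym Dfin, of "matvec p X \<beta>s"] unfolding Dr_def l1 .
    also have "\<dots> \<le> 1"
      by (rule prior_le1[OF pi gm g1]) (use lik_meas lik_le1 in auto)
    finally have "1 / Dr \<le> 1" by simp
    then show ?thesis using Dpos by (simp add: field_simps)
  qed
  have t0: "0 \<le> t"
  proof -
    have C2: "1 \<le> C\<^sup>2" using C1 by (simp add: one_le_power)
    have "1 \<le> C\<^sup>2 * Dr" using mult_mono[OF C2 D1] by simp
    then have "0 \<le> ln (C\<^sup>2 * Dr)" by simp
    then show ?thesis unfolding t_def using r1 by (intro add_nonneg_nonneg mult_nonneg_nonneg) auto
  qed
  have Bdef: "rate_set n p \<pi> g X \<beta>0 \<beta>s r = {\<beta>. vnorm n (matvec p X (\<lambda>j. \<beta> j - \<beta>0 j)) > 7 * vnorm n (matvec p X (\<lambda>j. \<beta>s j - \<beta>0 j)) + t}"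
    unfolding rate_set_def Let_def t_def C_def Dr_def using Dfin by (simp add: add.assoc)
  define V where "V = (\<lambda>S. insert (matvec p X \<beta>s) ((\<lambda>j i. X i j) ` S))"
  have "\<forall>S\<in>Pow {..<p}. \<exists>ke. fst ke \<le> card (V S) \<and> orthonormal n (fst ke) (snd ke) \<and> (\<forall>v\<in>V S. recon n (fst ke) (snd ke) v)"
  proof
    fix S assume "S \<in> Pow {..<p}"
    then have "finite (V S)" unfolding V_def using finite_subset[of S "{..<p}"] by auto
    from gram_schmidt[OF this, of n] show "\<exists>ke. fst ke \<le> card (V S) \<and> orthonormal n (fst ke) (snd ke) \<and> (\<forall>v\<in>V S. recon n (fst ke) (snd ke) v)"
      by auto
  qed
  then obtain KE where KE: "\<And>S. S \<in> Pow {..<p} \<Longrightarrow> fst (KE S) \<le> card (V S) \<and> orthonormal n (fst (KE S)) (snd (KE S)) \<and> (\<forall>v\<in>V S. recon n (fst (KE S)) (snd (KE S)) v)"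
    by (metis bchoice)
  define kk where "kk = (\<lambda>S. fst (KE S))"
  define ee where "ee = (\<lambda>S. snd (KE S))"
  have on: "orthonormal n (kk S) (ee S)" if "S \<in> Pow {..<p}" for S using KE[OF that] unfolding kk_def ee_def by auto
  have basis: "recon n (kk S) (ee S) (matvec p X \<beta>s) \<and> (\<forall>j\<in>S. recon n (kk S) (ee S) (\<lambda>i. X i j))"
    if "S \<in> Pow {..<p}" for S using KE[OF that] unfolding kk_def ee_def V_def by auto
  have kk_le: "kk S \<le> card S + 1" if S: "S \<in> Pow {..<p}" for S
  proof -
    have "kk S \<le> card (V S)" using KE[OF S] unfolding kk_def by auto
    also have "\<dots> \<le> card ((\<lambda>j i. X i j) ` S) + 1"
    proof -
      have "finite ((\<lambda>j i. X i j) ` S)" using S finite_subset[of S "{..<p}"] by auto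
      then show ?thesis unfolding V_def by (simp add: card_insert_if)
    qed
    also have "card ((\<lambda>j i. X i j) ` S) \<le> card S" by (rule card_image_le) (use S finite_subset in auto)
    finally show ?thesis by simp
  qed
  define w where "w = (\<lambda>S::nat set. pmf \<pi> (card S) / real (p choose card S))"
  define R2 where "R2 = (\<lambda>S Y. \<Sum>l<kk S. (ip n (ee S l) (\<lambda>i. Y i - m0 i))\<^sup>2)"
  define a where "a = (\<lambda>S. sqrt (Dr * w S) * exp (- t\<^sup>2/32))"
  have a0: "0 \<le> a S" for S unfolding a_def w_def using Dpos by simp
  define H where "H = (\<lambda>Y. \<Sum>S\<in>Pow {..<p}. a S * exp (6/13 * R2 S Y))"
  have pw: "posterior n p X (prior p \<pi> g) Y (rate_set n p \<pi> g X \<beta>0 \<beta>s r) \<le> H Y" for Y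
  proof -
    have "posterior n p X (prior p \<pi> g) Y (rate_set n p \<pi> g X \<beta>0 \<beta>s r)
      \<le> (\<Sum>S\<in>Pow {..<p}. sqrt (real_of_ereal (D_beta n \<pi> g X p \<beta>s) * (pmf \<pi> (card S) / real (p choose card S)))
          * exp (6/13 * (\<Sum>l<kk S. (ip n (ee S l) (\<lambda>i. Y i - matvec p X \<beta>0 i))\<^sup>2) - t\<^sup>2/32))"
      by (rule post_pointwise[OF pi gm g1 sym Dfin t0 Bdef basis])
    also have "\<dots> = H Y"
      unfolding H_def
    proof (intro sum.cong refl)
      fix S
      define q where "q = (\<Sum>l<kk S. (ip n (ee S l) (\<lambda>i. Y i - matvec p X \<beta>0 i))\<^sup>2)"
      have ee: "exp (6/13 * q - t\<^sup>2/32) = exp (- t\<^sup>2/32) * exp (6/13 * q)"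
        by (subst exp_add[symmetric]) simp
      show "sqrt (real_of_ereal (D_beta n \<pi> g X p \<beta>s) * (pmf \<pi> (card S) / real (p choose card S)))
          * exp (6/13 * (\<Sum>l<kk S. (ip n (ee S l) (\<lambda>i. Y i - matvec p X \<beta>0 i))\<^sup>2) - t\<^sup>2/32)
          = a S * exp (6/13 * R2 S Y)"
      proof -
        have rq: "R2 S Y = q" unfolding R2_def m0_def q_def ..
        show ?thesis unfolding q_def[symmetric] ee rq a_def w_def Dr_def by (simp only: mult.assoc)
      qed
    qed
    finally show ?thesis .
  qed
  define P where "P = (\<lambda>Y. posterior n p X (prior p \<pi> g) Y (rate_set n p \<pi> g X \<beta>0 \<beta>s r))"
  have P0: "0 \<le> P Y" for Y
    unfolding P_def posterior_def
    by (intro divide_nonneg_nonneg integral_nonneg) (auto simp: lik_def)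
  define DL where "DL = data_law n p X \<beta>0"
  have DLeq: "DL = PiM {..<n} (\<lambda>i. N1 (m0 i))" unfolding DL_def data_law_def m0_def ..
  have Rm: "(\<lambda>Y. ennreal (exp (6/13 * R2 S Y))) \<in> borel_measurable DL" for S
    unfolding DLeq R2_def ip_def by measurable
  have gS: "(\<integral>\<^sup>+Y. ennreal (exp (6/13 * R2 S Y)) \<partial>DL) = ennreal (sqrt 13 ^ kk S)" if S: "S \<in> Pow {..<p}" for S
  proof -
    have "(\<integral>\<^sup>+Y. ennreal (exp (6/13 * R2 S Y)) \<partial>DL) = ennreal ((1 / sqrt (1 - 2 * (6/13))) ^ kk S)"
      unfolding DLeq R2_def by (rule gauss[OF on[OF S]]) auto
    also have "1 / sqrt (1 - 2 * (6/13::real)) = sqrt 13" by (simp add: real_sqrt_divide)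
    finally show ?thesis .
  qed
  have intH: "(\<integral>\<^sup>+Y. ennreal (H Y) \<partial>DL) = ennreal (\<Sum>S\<in>Pow {..<p}. a S * sqrt 13 ^ kk S)"
  proof -
    have "(\<integral>\<^sup>+Y. ennreal (H Y) \<partial>DL) = (\<integral>\<^sup>+Y. (\<Sum>S\<in>Pow {..<p}. ennreal (a S) * ennreal (exp (6/13 * R2 S Y))) \<partial>DL)"
      unfolding H_def using a0 by (intro nn_integral_cong) (simp add: sum_ennreal[symmetric] ennreal_mult)
    also have "\<dots> = (\<Sum>S\<in>Pow {..<p}. \<integral>\<^sup>+Y. ennreal (a S) * ennreal (exp (6/13 * R2 S Y)) \<partial>DL)"
      by (rule nn_integral_sum) (use Rm in measurable)
    also have "\<dots> = (\<Sum>S\<in>Pow {..<p}. ennreal (a S) * ennreal (sqrt 13 ^ kk S))"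
      by (intro sum.cong refl) (subst nn_integral_cmult[OF Rm], subst gS, auto)
    also have "\<dots> = ennreal (\<Sum>S\<in>Pow {..<p}. a S * sqrt 13 ^ kk S)"
      using a0 by (simp add: sum_ennreal[symmetric] ennreal_mult)
    finally show ?thesis .
  qed
  have bound: "(\<Sum>S\<in>Pow {..<p}. a S * sqrt 13 ^ kk S) \<le> 4 * exp (- r)"
  proof -
    have "(\<Sum>S\<in>Pow {..<p}. a S * sqrt 13 ^ kk S) \<le> (\<Sum>S\<in>Pow {..<p}. a S * sqrt 13 ^ (card S + 1))"
    proof (rule sum_mono)
      fix S assume S: "S \<in> Pow {..<p}"
      have "sqrt 13 ^ kk S \<le> sqrt (13::real) ^ (card S + 1)"
        by (rule power_increasing[OF kk_le[OF S]]) simp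
      then show "a S * sqrt 13 ^ kk S \<le> a S * sqrt 13 ^ (card S + 1)" using a0 by (rule mult_left_mono)
    qed
    also have "\<dots> = sqrt 13 * sqrt Dr * exp (- t\<^sup>2/32) * (\<Sum>S\<in>Pow {..<p}. sqrt (pmf \<pi> (card S) / real (p choose card S)) * sqrt 13 ^ card S)"
    proof -
      have aS: "a S = sqrt Dr * sqrt (w S) * exp (- t\<^sup>2/32)" for S unfolding a_def real_sqrt_mult ..
      show ?thesis unfolding aS w_def by (simp add: sum_distrib_left mult_ac)
    qed
    also have "\<dots> \<le> sqrt 13 * sqrt Dr * exp (- t\<^sup>2/32) * C"
      unfolding C_def by (intro mult_left_mono sum_w_le_Cpi[OF pi]) (use Dpos in simp)
    also have "\<dots> \<le> 4 * exp (- r)"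
      by (rule final_arith[OF C1 D1 r1 t_def])
    finally show ?thesis .
  qed
  show ?thesis
  proof (cases "integrable DL P")
    case False
    then show ?thesis unfolding P_def DL_def using not_integrable_integral_eq by fastforce
  next
    case True
    have "(\<integral>Y. P Y \<partial>DL) = enn2real (\<integral>\<^sup>+Y. ennreal (P Y) \<partial>DL)"
      using True by (intro integral_eq_nn_integral) (auto simp: P0)
    also have "\<dots> \<le> enn2real (\<integral>\<^sup>+Y. ennreal (H Y) \<partial>DL)"
      by (intro enn2real_mono nn_integral_mono ennreal_leI) (auto simp: pw[unfolded P_def[symmetric]] intH P_def)
    also have "\<dots> \<le> 4 * exp (- r)"
      unfolding intH using bound a0 by (subst enn2real_ennreal) (auto intro!: sum_nonneg)
    finally show ?thesis unfolding P_def DL_def .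
  qed
qed

theorem theorem8:
  shows "\<exists>C::real. \<forall>(n::nat) (p::nat) (X::nat \<Rightarrow> nat \<Rightarrow> real) (\<pi>::nat pmf) (g::real \<Rightarrow> real)
            (\<beta>0::nat \<Rightarrow> real) (\<beta>s::nat \<Rightarrow> real) (r::real).
     set_pmf \<pi> \<subseteq> {..p} \<and> g \<in> borel_measurable lborel \<and> (\<forall>x. 0 \<le> g x) \<and>
     (\<integral>\<^sup>+ x. ennreal (g x) \<partial>lborel) = 1 \<and> (\<forall>x. g (- x) = g x) \<and> 1 \<le> r \<longrightarrow>
     (\<integral>Y. posterior n p X (prior p \<pi> g) Y (rate_set n p \<pi> g X \<beta>0 \<beta>s r) \<partial>(data_law n p X \<beta>0))
       \<le> C * exp (- r)"
  by (rule exI[of _ 4]) (auto intro!: main_case)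

end
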